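(* Let $K$ be a field with $\operatorname{char}K=2$ and let $v_0,v_1,v_2$ be the pivot elements (context). Then: (i) the Lie subalgebra of $(\operatorname{End}\Lambda)^{(-)}$ generated by $v_0,v_1,v_2$ using the commutator only has as a basis the standard monomials of the first type; (ii) the Lie superalgebra $\mathbf Q$ generated by $v_0,v_1,v_2$ (closed also under the squaring map $a\mapsto a^2$ on odd elements), as well as the restricted Lie subalgebra of $(\operatorname{End}\Lambda)^{(-)}$ generated by $v_0,v_1,v_2$ (closed under commutators and $a\mapsto a^2$), has as a basis the standard monomials of the first type together with the elements $x_{n-2}v_n$, $n\ge 3$ (the squares of the pivot elements).
   Context: $\Lambda$ is the Grassmann algebra over $K$ on odd generators $x_0,x_1,\dots$; $x_i$ is identified with left multiplication by $x_i$; $\partial_i$ is the odd superderivation with $\partial_i(x_j)=\delta_{ij}$; pivot elements $v_i=\sum_{k\ge0}\big(\prod_{n=0}^{k-1}x_{i+3n}x_{i+3n+1}\big)\partial_{i+3k}$ ($i\ge0$), elements of $\operatorname{End}\Lambda$; $(\operatorname{End}\Lambda)^{(-)}$ carries the (super)commutator. A tail monomial is $r_m=x_0^{\xi_0}\cdots x_m^{\xi_m}$, $\xi_i\in\{0,1\}$ ($r_m=1$ if $m<0$). The standard monomials of the first type are all $r_{n-3}v_n$, $n\ge0$, except $x_0x_1^{\xi_1}v_4$ and $x_0x_1^{\xi_1}x_2^{\xi_2}x_3x_4^{\xi_4}v_7$ ($\xi_j\in\{0,1\}$ arbitrary). *)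

theory Defs
  imports Complex_Main "HOL-Library.Groups_Big_Fun" "HOL-Library.Function_Algebras"
begin

text \<open>An element is given by its coefficient function on the basis monomials
  x_S = x_{s_1} ... x_{s_m} (s_1 < ... < s_m), S a finite set of indices.\<close>

type_synonym 'k grass = "nat set \<Rightarrow> 'k"
type_synonym 'k op = "'k grass \<Rightarrow> 'k grass"

definition Lam :: "'k::field grass set" where
  "Lam = {f. finite {S. f S \<noteq> 0} \<and> (\<forall>S. f S \<noteq> 0 \<longrightarrow> finite S)}"

definition sgn_before :: "nat \<Rightarrow> nat set \<Rightarrow> 'k::field" where
  "sgn_before i S = (-1) ^ card {j \<in> S. j < i}"

text \<open>left multiplication by x_i\<close>
definition xop :: "nat \<Rightarrow> 'k::field op" where
  "xop i f = (\<lambda>S. if i \<in> S then sgn_before i S * f (S - {i}) else 0)"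

text \<open>odd superderivation d_i with d_i(x_j) = delta_ij\<close>
definition dop :: "nat \<Rightarrow> 'k::field op" where
  "dop i f = (\<lambda>S. if i \<notin> S then sgn_before i S * f (insert i S) else 0)"

fun preprod :: "nat \<Rightarrow> nat \<Rightarrow> 'k::field op" where
  "preprod i 0 = id"
| "preprod i (Suc k) = preprod i k \<circ> xop (i + 3*k) \<circ> xop (i + 3*k + 1)"

text \<open>pivot element v_i = sum_{k>=0} (prod ...) d_{i+3k}; the infinite sum is
  locally finite and is evaluated coefficientwise (Sum_any = sum over the
  finitely many nonzero terms).\<close>
definition vraw :: "nat \<Rightarrow> 'k::field op" where
  "vraw i f = (\<lambda>S. Sum_any (\<lambda>k. (preprod i k \<circ> dop (i + 3*k)) f S))"

text \<open>restriction of an operator to Lambda; End Lambda is identified with the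
  operators vanishing outside Lambda\<close>
definition restr :: "'k::field op \<Rightarrow> 'k op" where
  "restr A = (\<lambda>f. if f \<in> Lam then A f else 0)"

definition pivot :: "nat \<Rightarrow> 'k::field op" where
  "pivot i = restr (vraw i)"

definition monop :: "nat set \<Rightarrow> 'k::field op" where
  "monop T = foldr (\<circ>) (map xop (sorted_list_of_set T)) id"

definition scl :: "'k::field \<Rightarrow> 'k op \<Rightarrow> 'k op" where
  "scl c A = (\<lambda>f S. c * A f S)"

text \<open>commutator in (End Lambda)^(-); in characteristic 2 the super commutator
  ab - (-1)^{|a||b|} ba coincides with ab - ba\<close>
definition brk :: "'k::field op \<Rightarrow> 'k op \<Rightarrow> 'k op" where
  "brk A B = (A \<circ> B) - (B \<circ> A)"

definition sq :: "'k::field op \<Rightarrow> 'k op" where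
  "sq A = A \<circ> A"

definition homog :: "bool \<Rightarrow> 'k::field grass \<Rightarrow> bool" where
  "homog b f \<longleftrightarrow> f \<in> Lam \<and> (\<forall>S. f S \<noteq> 0 \<longrightarrow> odd (card S) = b)"

definition odd_op :: "'k::field op \<Rightarrow> bool" where
  "odd_op A \<longleftrightarrow> (\<forall>b f. homog b f \<longrightarrow> homog (\<not> b) (A f))"

definition lie_closed :: "'k::field op set \<Rightarrow> bool" where
  "lie_closed L \<longleftrightarrow> module.subspace scl L \<and> (\<forall>A\<in>L. \<forall>B\<in>L. brk A B \<in> L)"

definition lie_gen :: "'k::field op set \<Rightarrow> 'k op set" where
  "lie_gen G = \<Inter>{L. G \<subseteq> L \<and> lie_closed L}"

definition rlie_gen :: "'k::field op set \<Rightarrow> 'k op set" where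
  "rlie_gen G = \<Inter>{L. G \<subseteq> L \<and> lie_closed L \<and> (\<forall>A\<in>L. sq A \<in> L)}"

definition slie_gen :: "'k::field op set \<Rightarrow> 'k op set" where
  "slie_gen G = \<Inter>{L. G \<subseteq> L \<and> lie_closed L \<and> (\<forall>A\<in>L. odd_op A \<longrightarrow> sq A \<in> L)}"

definition is_basis :: "'k::field op set \<Rightarrow> 'k op set \<Rightarrow> bool" where
  "is_basis B L \<longleftrightarrow> \<not> module.dependent scl B \<and> module.span scl B = L"

text \<open>standard monomials of the first type: r_{n-3} v_n, with r_{n-3} = x_T,
  T \<subseteq> {0..n-3}, except x_0 x_1^a v_4 and x_0 x_1^a x_2^b x_3 x_4^c v_7\<close>
definition std1 :: "'k::field op set" where
  "std1 = {restr (monop T \<circ> vraw n) | n T.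
      T \<subseteq> {i. i + 3 \<le> n}
      \<and> \<not> (n = 4 \<and> 0 \<in> T)
      \<and> \<not> (n = 7 \<and> 0 \<in> T \<and> 3 \<in> T)}"

text \<open>the squares of the pivot elements, x_{n-2} v_n, n \<ge> 3\<close>
definition sqpiv :: "'k::field op set" where
  "sqpiv = {restr (xop (n - 2) \<circ> vraw n) | n. 3 \<le> n}"

end

theory Submission
  imports Defs
begin



section \<open>Characteristic 2 basics\<close>

lemma c2_neg: assumes two: "(1::'k::field) + 1 = 0" shows "- (x::'k) = x"
proof -
  have "x + x = x * (1 + 1)" by (simp add: algebra_simps)
  then have "x + x = 0" using two by simp
  then show ?thesis by (simp add: add_eq_0_iff2 eq_neg_iff_add_eq_0)
qed

lemma c2_double: assumes two: "(1::'k::field) + 1 = 0" shows "(x::'k) + x = 0"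
  using c2_neg[OF two, of x] by (metis add.right_inverse)

lemma c2_sgn: assumes two: "(1::'k::field) + 1 = 0" shows "(sgn_before i S :: 'k) = 1"
proof -
  have m1: "(-1::'k) = 1" using c2_neg[OF two, of 1] by simp
  show ?thesis unfolding sgn_before_def m1 by (simp only: power_one)
qed

definition mulm :: "nat set \<Rightarrow> 'k::field op" where
  "mulm T g = (\<lambda>U. if T \<subseteq> U then g (U - T) else 0)"

lemma xop_c2: assumes two: "(1::'k::field) + 1 = 0" shows "(xop i :: 'k op) = mulm {i}"
  by (auto simp: fun_eq_iff xop_def mulm_def c2_sgn[OF two])

lemma dop_c2: assumes two: "(1::'k::field) + 1 = 0"
  shows "(dop i :: 'k op) f = (\<lambda>U. if i \<notin> U then f (insert i U) else 0)"
  by (auto simp: fun_eq_iff dop_def c2_sgn[OF two])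

lemma mulm_mulm: "mulm S (mulm T g) = (if S \<inter> T = {} then mulm (S \<union> T) g else (\<lambda>_. 0))"
  by (auto simp: fun_eq_iff mulm_def Diff_Un Un_commute intro!: arg_cong[where f=g])

lemma mulm_empty[simp]: "mulm {} g = g"
  by (simp add: mulm_def fun_eq_iff)

lemma mulm_add: "mulm T (g + h) = mulm T g + mulm T h"
  by (auto simp: fun_eq_iff mulm_def)

lemma mulm_zero[simp]: "mulm T (0::'k::field grass) = 0"
  by (auto simp: fun_eq_iff mulm_def)

lemma mulm_zero'[simp]: "mulm T (\<lambda>_. 0::'k::field) = (\<lambda>_. 0)"
  by (auto simp: fun_eq_iff mulm_def)

lemma sum_fun_app: "(sum g K) x = (\<Sum>k\<in>K. g k x)"
  by (induction K rule: infinite_finite_induct) auto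

lemma mulm_sum: "mulm T (\<Sum>k\<in>K. g k) = (\<Sum>k\<in>K. mulm T (g k))"
  by (auto simp: fun_eq_iff mulm_def sum_fun_app)

lemma mulm_scale: "mulm T (\<lambda>S. c * g S) = (\<lambda>S. c * mulm T g S)"
  by (auto simp: fun_eq_iff mulm_def)

lemma monop_eq:
  assumes two: "(1::'k::field) + 1 = 0" and fin: "finite T"
  shows "(monop T :: 'k op) = mulm T"
proof -
  have "\<And>xs. sorted xs \<Longrightarrow> distinct xs \<Longrightarrow> foldr (\<circ>) (map xop xs) id = (mulm (set xs) :: 'k op)"
  proof -
    fix xs :: "nat list"
    show "sorted xs \<Longrightarrow> distinct xs \<Longrightarrow> foldr (\<circ>) (map xop xs) id = (mulm (set xs) :: 'k op)"
    proof (induction xs)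
      case Nil then show ?case by (simp add: fun_eq_iff)
    next
      case (Cons a xs)
      then have na: "a \<notin> set xs" by simp
      have "foldr (\<circ>) (map xop (a#xs)) id = xop a \<circ> foldr (\<circ>) (map xop xs) id" by simp
      also have "\<dots> = mulm {a} \<circ> (mulm (set xs) :: 'k op)"
      proof -
        have IH: "foldr (\<circ>) (map xop xs) id = (mulm (set xs) :: 'k op)" using Cons.prems by (intro Cons.IH) auto
        show ?thesis by (simp only: IH xop_c2[OF two])
      qed
      also have "\<dots> = mulm (set (a#xs))" using na by (simp add: fun_eq_iff mulm_mulm)
      finally show ?case .
    qed
  qed
  from this[of "sorted_list_of_set T"] fin show ?thesis
    unfolding monop_def by simp
qed




definition Pset :: "nat \<Rightarrow> nat \<Rightarrow> nat set" where
  "Pset n k = {n + 3*t | t. t < k} \<union> {n + 3*t + 1 | t. t < k}"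

lemma Pset_iff: "x \<in> Pset n k \<longleftrightarrow> n \<le> x \<and> x < n + 3*k \<and> (x - n) mod 3 \<noteq> 2"
proof
  assume "x \<in> Pset n k"
  then show "n \<le> x \<and> x < n + 3*k \<and> (x - n) mod 3 \<noteq> 2"
    unfolding Pset_def by auto
next
  assume a: "n \<le> x \<and> x < n + 3*k \<and> (x - n) mod 3 \<noteq> 2"
  define t where "t = (x - n) div 3"
  have x: "x = n + 3*t + (x - n) mod 3" using a unfolding t_def by simp
  have "t < k" using a unfolding t_def by linarith
  moreover have "(x - n) mod 3 = 0 \<or> (x - n) mod 3 = 1" using a by linarith
  ultimately show "x \<in> Pset n k" unfolding Pset_def using x by auto
qed

lemma Pset_0[simp]: "Pset n 0 = {}"
  by (auto simp: Pset_iff)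

lemma Pset_Suc: "Pset n (Suc k) = Pset n k \<union> {n + 3*k, n + 3*k + 1}"
  unfolding Pset_def by (auto simp: less_Suc_eq)

lemma Pset_Suc': "Pset n (Suc k) = {n, n+1} \<union> Pset (n+3) k"
proof -
  have "{n + 3*t | t. t < Suc k} = {n} \<union> {n + 3 + 3*t | t. t < k}"
    apply (auto simp: less_Suc_eq_0_disj)
    subgoal for t by (rule exI[of _ "Suc t"]) auto
    done
  moreover have "{n + 3*t + 1 | t. t < Suc k} = {n+1} \<union> {n + 3 + 3*t + 1 | t. t < k}"
    apply (auto simp: less_Suc_eq_0_disj)
    subgoal for t by (rule exI[of _ "Suc t"]) auto
    done
  ultimately show ?thesis unfolding Pset_def by auto
qed

lemma Pset_finite[simp]: "finite (Pset n k)"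
  by (rule finite_subset[of _ "{..<n+3*k}"]) (auto simp: Pset_iff)

lemma Pset_card: "k \<le> card (Pset n k)"
proof -
  have "inj_on (\<lambda>t. n + 3*t) {..<k}" by (auto simp: inj_on_def)
  moreover have "(\<lambda>t. n + 3*t) ` {..<k} \<subseteq> Pset n k" by (auto simp: Pset_iff)
  ultimately show ?thesis
    by (metis Pset_finite card_image card_lessThan card_mono)
qed

lemma j_notin_Pset[simp]: "n + 3*k \<notin> Pset n k"
  by (auto simp: Pset_iff)

lemma preprod_eq:
  assumes two: "(1::'k::field) + 1 = 0"
  shows "(preprod n k :: 'k op) = mulm (Pset n k)"
proof (induction k)
  case 0 then show ?case by (simp add: fun_eq_iff)
next
  case (Suc k)
  have d1: "Pset n k \<inter> {n + 3*k} = {}" by auto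
  have d2: "(Pset n k \<union> {n + 3*k}) \<inter> {n + 3*k + 1} = {}" by (auto simp: Pset_iff)
  have "(preprod n (Suc k) :: 'k op) = mulm (Pset n k) \<circ> mulm {n+3*k} \<circ> mulm {n+3*k+1}"
    using Suc by (simp add: xop_c2[OF two])
  also have "\<dots> = mulm (Pset n k \<union> {n + 3*k} \<union> {n+3*k+1})"
    using d1 d2 by (simp add: fun_eq_iff mulm_mulm)
  also have "Pset n k \<union> {n + 3*k} \<union> {n+3*k+1} = Pset n (Suc k)"
    by (auto simp: Pset_Suc)
  finally show ?case .
qed

definition tm :: "nat \<Rightarrow> nat \<Rightarrow> 'k::field grass \<Rightarrow> nat set \<Rightarrow> 'k" where
  "tm n k f U = (if Pset n k \<subseteq> U \<and> n + 3*k \<notin> U then f (insert (n+3*k) (U - Pset n k)) else 0)"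

lemma vraw_Sum_any:
  assumes two: "(1::'k::field) + 1 = 0"
  shows "vraw n (f :: 'k grass) U = Sum_any (\<lambda>k. tm n k f U)"
  unfolding vraw_def
proof (rule Sum_any.cong)
  fix k
  have j: "n + 3*k \<notin> Pset n k" by simp
  show "(preprod n k \<circ> dop (n + 3 * k)) f U = tm n k f U"
    using j by (auto simp: preprod_eq[OF two] dop_c2[OF two] mulm_def tm_def)
qed

lemma tm_support:
  assumes "finite U" "tm n k f U \<noteq> 0" shows "k \<le> card U"
proof -
  have "Pset n k \<subseteq> U" using assms(2) by (auto simp: tm_def split: if_splits)
  then have "card (Pset n k) \<le> card U" using assms(1) by (rule card_mono[rotated])
  with Pset_card[of k n] show ?thesis by linarith
qed

lemma vraw_fin:
  assumes two: "(1::'k::field) + 1 = 0" and fin: "finite U" and N: "card U \<le> N"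
  shows "vraw n (f :: 'k grass) U = (\<Sum>k\<le>N. tm n k f U)"
proof -
  have "{k. tm n k f U \<noteq> 0} \<subseteq> {..N}"
    using tm_support[OF fin] N by fastforce
  then show ?thesis
    by (simp add: vraw_Sum_any[OF two] Sum_any.expand_superset)
qed

definition infz :: "'k::field grass \<Rightarrow> bool" where
  "infz g \<longleftrightarrow> (\<forall>U. infinite U \<longrightarrow> g U = 0)"

lemma Lam_infz: "f \<in> Lam \<Longrightarrow> infz f"
  unfolding Lam_def infz_def by auto

lemma tm_infz: "infz f \<Longrightarrow> infinite U \<Longrightarrow> tm n k f U = 0"
  unfolding tm_def infz_def by auto

lemma vraw_infz:
  assumes two: "(1::'k::field) + 1 = 0" and "infz (f::'k grass)" shows "infz (vraw n f)"
  using assms unfolding infz_def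
  by (auto simp: vraw_Sum_any[OF two] tm_infz[unfolded infz_def])

lemma mulm_infz: "finite T \<Longrightarrow> infz g \<Longrightarrow> infz (mulm T g)"
  unfolding infz_def mulm_def by auto

lemma infz_add: "infz f \<Longrightarrow> infz g \<Longrightarrow> infz (f + g)"
  unfolding infz_def by auto

lemma infz_zero[simp]: "infz 0" "infz (\<lambda>_. 0)"
  unfolding infz_def by auto

lemma infz_sum: "(\<And>k. k \<in> K \<Longrightarrow> infz (g k)) \<Longrightarrow> infz (\<Sum>k\<in>K. g k)"
  unfolding infz_def by (auto simp: sum_fun_app)

lemma Lam_add: "f \<in> Lam \<Longrightarrow> g \<in> Lam \<Longrightarrow> f + g \<in> Lam"
proof -
  assume a: "f \<in> Lam" "g \<in> Lam"
  have "{S. (f + g) S \<noteq> 0} \<subseteq> {S. f S \<noteq> 0} \<union> {S. g S \<noteq> 0}" by auto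
  then show ?thesis using a unfolding Lam_def by (auto intro: finite_subset)
qed

lemma Lam_zero[simp]: "0 \<in> Lam" "(\<lambda>_. 0) \<in> Lam"
  unfolding Lam_def by auto

lemma Lam_scale: "f \<in> Lam \<Longrightarrow> (\<lambda>S. c * f S) \<in> Lam"
proof -
  assume a: "f \<in> Lam"
  have "{S. c * f S \<noteq> 0} \<subseteq> {S. f S \<noteq> 0}" by auto
  then show ?thesis using a unfolding Lam_def by (auto intro: finite_subset)
qed

lemma Lam_uminus: "f \<in> Lam \<Longrightarrow> - f \<in> Lam"
  unfolding Lam_def by auto

lemma Lam_diff: "f \<in> Lam \<Longrightarrow> g \<in> Lam \<Longrightarrow> f - g \<in> Lam"
  using Lam_add[of f "-g"] Lam_uminus[of g] by simp

lemma mulm_Lam: assumes "finite T" "f \<in> Lam" shows "mulm T f \<in> Lam"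
proof -
  have "{U. mulm T f U \<noteq> 0} \<subseteq> (\<lambda>W. W \<union> T) ` {S. f S \<noteq> 0}"
  proof
    fix U assume "U \<in> {U. mulm T f U \<noteq> 0}"
    then have "T \<subseteq> U" "f (U - T) \<noteq> 0" by (auto simp: mulm_def split: if_splits)
    then show "U \<in> (\<lambda>W. W \<union> T) ` {S. f S \<noteq> 0}" by (auto intro!: image_eqI[of _ _ "U - T"])
  qed
  moreover have "\<forall>S. mulm T f S \<noteq> 0 \<longrightarrow> finite S"
    using assms unfolding Lam_def mulm_def
    by (auto split: if_splits)
  ultimately show ?thesis using assms unfolding Lam_def by (auto intro: finite_subset)
qed

lemma vraw_Lam:
  assumes two: "(1::'k::field) + 1 = 0" and f: "(f :: 'k grass) \<in> Lam"
  shows "vraw n f \<in> Lam"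
proof -
  have iz: "infz (vraw n f)" using vraw_infz[OF two Lam_infz[OF f]] .
  have "{U. vraw n f U \<noteq> 0} \<subseteq>
      (\<lambda>(W,j). (W - {j}) \<union> Pset n ((j - n) div 3)) ` (SIGMA W:{S. f S \<noteq> 0}. W)"
  proof
    fix U assume U: "U \<in> {U. vraw n f U \<noteq> 0}"
    then have "Sum_any (\<lambda>k. tm n k f U) \<noteq> 0" by (simp add: vraw_Sum_any[OF two])
    then obtain k where k: "tm n k f U \<noteq> 0" by (rule Sum_any.not_neutral_obtains_not_neutral)
    define j where "j = n + 3*k"
    have P: "Pset n k \<subseteq> U" "j \<notin> U" and fW: "f (insert j (U - Pset n k)) \<noteq> 0"
      using k unfolding tm_def j_def by (auto split: if_splits)
    have jd: "(j - n) div 3 = k" unfolding j_def by simp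
    have "U = (insert j (U - Pset n k) - {j}) \<union> Pset n ((j - n) div 3)"
      using P jd by auto
    then show "U \<in> (\<lambda>(W,j). (W - {j}) \<union> Pset n ((j - n) div 3)) ` (SIGMA W:{S. f S \<noteq> 0}. W)"
      using fW by (auto intro!: image_eqI[of _ _ "(insert j (U - Pset n k), j)"])
  qed
  moreover have "finite (SIGMA W:{S. f S \<noteq> 0}. W)"
    using f unfolding Lam_def by (auto intro!: finite_SigmaI)
  ultimately have "finite {U. vraw n f U \<noteq> 0}" by (rule finite_subset[OF _ finite_imageI])
  then show ?thesis using iz unfolding Lam_def infz_def by auto
qed




lemma Pset_lb: "x \<in> Pset n k \<Longrightarrow> n \<le> x"
  by (simp add: Pset_iff)

lemma Pset_ub: "x \<in> Pset n k \<Longrightarrow> x + 2 \<le> n + 3*k"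
  unfolding Pset_def by auto

definition feq :: "'k::field grass \<Rightarrow> 'k grass \<Rightarrow> bool" where
  "feq g h \<longleftrightarrow> (\<forall>V. finite V \<longrightarrow> g V = h V)"

lemma feq_refl[simp]: "feq g g" by (simp add: feq_def)

lemma vraw_fin':
  assumes two: "(1::'k::field) + 1 = 0" and fin: "finite U"
  shows "vraw n (f :: 'k grass) U = (\<Sum>k\<le>card U. tm n k f U)"
  using vraw_fin[OF two fin order_refl] .

lemma tm_cong: "feq g h \<Longrightarrow> finite U \<Longrightarrow> tm n k g U = tm n k h U"
  unfolding feq_def tm_def by auto

lemma vraw_cong:
  assumes two: "(1::'k::field) + 1 = 0" and "feq (g::'k grass) h" "finite U"
  shows "vraw n g U = vraw n h U"
  using assms by (simp add: vraw_fin'[OF two] tm_cong)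

lemma vraw_feq:
  assumes two: "(1::'k::field) + 1 = 0" and "feq (g::'k grass) h"
  shows "feq (vraw n g) (vraw n h)"
  using vraw_cong[OF two assms(2)] unfolding feq_def by auto

lemma mulm_cong: "feq g h \<Longrightarrow> finite U \<Longrightarrow> mulm T g U = mulm T h U"
  unfolding feq_def mulm_def by auto

lemma mulm_feq: "feq g h \<Longrightarrow> feq (mulm T g) (mulm T h)"
  using mulm_cong unfolding feq_def by blast

lemma vraw_add:
  assumes two: "(1::'k::field) + 1 = 0" and "finite U"
  shows "vraw n ((g::'k grass) + h) U = vraw n g U + vraw n h U"
  unfolding vraw_fin'[OF two assms(2)]
  by (simp only: sum.distrib[symmetric]) (rule sum.cong, auto simp: tm_def)

lemma vraw_zero[simp]:
  assumes two: "(1::'k::field) + 1 = 0"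
  shows "vraw n (0::'k grass) = 0" "vraw n (\<lambda>_. 0::'k) = (\<lambda>_. 0)"
  by (auto simp: fun_eq_iff vraw_Sum_any[OF two] tm_def zero_fun_def)

lemma vraw_scale:
  assumes two: "(1::'k::field) + 1 = 0" and "finite U"
  shows "vraw n (\<lambda>S. c * (g::'k grass) S) U = c * vraw n g U"
  unfolding vraw_fin'[OF two assms(2)]
  by (simp only: sum_distrib_left) (rule sum.cong, auto simp: tm_def)

lemma vraw_sum:
  assumes two: "(1::'k::field) + 1 = 0" and "finite U"
  shows "vraw n (\<Sum>k\<in>K. (g k ::'k grass)) U = (\<Sum>k\<in>K. vraw n (g k) U)"
proof (induction K rule: infinite_finite_induct)
  case (infinite A) then show ?case using vraw_zero[OF two] by simp
next
  case empty then show ?case using vraw_zero[OF two] by simp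
next
  case (insert x F)
  have "vraw n (\<Sum>k\<in>insert x F. g k) U = vraw n (g x + sum g F) U"
    by (subst sum.insert[OF insert(1,2)]) (rule refl)
  also have "\<dots> = vraw n (g x) U + vraw n (sum g F) U" by (rule vraw_add[OF two assms(2)])
  also have "\<dots> = (\<Sum>k\<in>insert x F. vraw n (g k) U)"
    by (subst sum.insert[OF insert(1,2)]) (simp add: insert.IH)
  finally show ?case .
qed

lemma tm_Suc:
  "tm n (Suc k) f U = (if {n, n+1} \<subseteq> U then tm (n+3) k f (U - {n, n+1}) else 0)"
proof -
  have j: "n + 3 * Suc k = n + 3 + 3*k" by simp
  have nP: "n \<notin> Pset (n+3) k" "n+1 \<notin> Pset (n+3) k"
    using Pset_lb[of n "n+3" k] Pset_lb[of "n+1" "n+3" k] by auto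
  have e1: "(Pset (n+3) k \<subseteq> U - {n, n+1}) = (Pset (n+3) k \<subseteq> U)" using nP by auto
  have e2: "U - ({n, n + 1} \<union> Pset (n + 3) k) = U - {n, n+1} - Pset (n+3) k" by auto
  show ?thesis unfolding tm_def Pset_Suc' j e2 using e1 by auto
qed

lemma vraw_rec:
  assumes two: "(1::'k::field) + 1 = 0" and fin: "finite U"
  shows "vraw n (f::'k grass) U = dop n f U + mulm {n, n+1} (vraw (n+3) f) U"
proof -
  define N where "N = card U"
  have "vraw n f U = (\<Sum>k\<le>Suc N. tm n k f U)"
    using vraw_fin[OF two fin, of "Suc N"] N_def by simp
  also have "\<dots> = tm n 0 f U + (\<Sum>k\<le>N. tm n (Suc k) f U)"
    by (simp only: sum.atMost_Suc_shift)
  also have "tm n 0 f U = dop n f U"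
    by (simp add: tm_def dop_c2[OF two])
  also have "(\<Sum>k\<le>N. tm n (Suc k) f U) = mulm {n, n+1} (vraw (n+3) f) U"
  proof (cases "{n, n+1} \<subseteq> U")
    case True
    have cN: "card (U - {n, n+1}) \<le> N" using fin N_def by (simp add: card_mono)
    have "(\<Sum>k\<le>N. tm n (Suc k) f U) = (\<Sum>k\<le>N. tm (n+3) k f (U - {n, n+1}))"
      using True by (simp only: tm_Suc if_True)
    also have "\<dots> = vraw (n+3) f (U - {n, n+1})"
      by (rule vraw_fin[OF two _ cN, symmetric]) (use fin in simp)
    finally show ?thesis using True by (simp add: mulm_def)
  next
    case False then show ?thesis by (simp only: tm_Suc if_False mulm_def sum.neutral_const)
  qed
  finally show ?thesis .
qed

lemma vraw_rec_feq:
  assumes two: "(1::'k::field) + 1 = 0"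
  shows "feq (vraw n (f::'k grass)) (dop n f + mulm {n, n+1} (vraw (n+3) f))"
  using vraw_rec[OF two] unfolding feq_def by simp

lemma dop_cong: "feq g h \<Longrightarrow> finite U \<Longrightarrow> (1::'k::field) + 1 = 0 \<Longrightarrow> dop a (g::'k grass) U = dop a h U"
  unfolding feq_def by (simp add: dop_c2)

lemma dop_dop:
  assumes two: "(1::'k::field) + 1 = 0"
  shows "dop a (dop a (f::'k grass)) U = 0"
  by (simp add: dop_c2[OF two])

lemma dop_vraw:
  assumes two: "(1::'k::field) + 1 = 0" and ab: "a < b" and fin: "finite U"
  shows "dop a (vraw b (f::'k grass)) U = vraw b (dop a f) U"
proof -
  define N where "N = Suc (card U)"
  have aP: "a \<notin> Pset b k" for k using Pset_lb[of a b k] ab by auto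
  have aj: "a \<noteq> b + 3*k" for k using ab by auto
  have tmq: "(if a \<notin> U then tm b k f (insert a U) else 0) = tm b k (dop a f) U" for k
    using aP[of k] aj[of k] unfolding tm_def dop_c2[OF two]
    by (auto simp: insert_Diff_if insert_commute)
  have cN: "card (insert a U) \<le> N" "card U \<le> N" using fin by (simp_all add: N_def card_insert_if)
  have "dop a (vraw b f) U = (if a \<notin> U then vraw b f (insert a U) else 0)"
    by (simp add: dop_c2[OF two])
  also have "\<dots> = (if a \<notin> U then (\<Sum>k\<le>N. tm b k f (insert a U)) else 0)"
    using fin by (simp add: vraw_fin[OF two _ cN(1)])
  also have "\<dots> = (\<Sum>k\<le>N. (if a \<notin> U then tm b k f (insert a U) else 0))"
    by simp
  also have "\<dots> = (\<Sum>k\<le>N. tm b k (dop a f) U)"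
    using tmq by simp
  also have "\<dots> = vraw b (dop a f) U"
    using fin by (simp add: vraw_fin[OF two _ cN(2)])
  finally show ?thesis .
qed




lemma leib_term:
  assumes two: "(1::'k::field) + 1 = 0" and jP: "j \<notin> P"
  shows "(if P \<subseteq> U \<and> j \<notin> U then mulm T (f::'k grass) (insert j (U - P)) else 0)
   = (if T \<subseteq> U then (if P \<subseteq> U - T \<and> j \<notin> U - T then f (insert j (U - T - P)) else 0) else 0)
   + (if j \<in> T \<and> (T - {j}) \<inter> P = {} then mulm (T - {j} \<union> P) f U else 0)"
proof -
  have L: "(if P \<subseteq> U \<and> j \<notin> U then mulm T f (insert j (U - P)) else 0)
     = (if P \<subseteq> U \<and> j \<notin> U \<and> T \<subseteq> insert j (U - P) then f (insert j (U - P) - T) else 0)"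
    unfolding mulm_def by simp
  have R1: "(if T \<subseteq> U then (if P \<subseteq> U - T \<and> j \<notin> U - T then f (insert j (U - T - P)) else 0) else 0)
     = (if T \<subseteq> U \<and> P \<subseteq> U - T \<and> j \<notin> U - T then f (insert j (U - T - P)) else 0)"
    by auto
  have R2: "(if j \<in> T \<and> (T - {j}) \<inter> P = {} then mulm (T - {j} \<union> P) f U else 0)
     = (if j \<in> T \<and> (T - {j}) \<inter> P = {} \<and> T - {j} \<union> P \<subseteq> U then f (U - (T - {j} \<union> P)) else 0)"
    unfolding mulm_def by simp
  show ?thesis unfolding L R1 R2
  proof (cases "j \<in> T")
    case False
    have c: "(P \<subseteq> U \<and> j \<notin> U \<and> T \<subseteq> insert j (U - P)) = (T \<subseteq> U \<and> P \<subseteq> U - T \<and> j \<notin> U - T)"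
      using False by blast
    have s: "insert j (U - P) - T = insert j (U - T - P)" using False by blast
    show "(if P \<subseteq> U \<and> j \<notin> U \<and> T \<subseteq> insert j (U - P) then f (insert j (U - P) - T) else 0) =
    (if T \<subseteq> U \<and> P \<subseteq> U - T \<and> j \<notin> U - T then f (insert j (U - T - P)) else 0) +
    (if j \<in> T \<and> (T - {j}) \<inter> P = {} \<and> T - {j} \<union> P \<subseteq> U then f (U - (T - {j} \<union> P)) else 0)"
      using False by (simp only: c s if_False conj_absorb simp_thms add_0_right)
  next
    case jT: True
    show "(if P \<subseteq> U \<and> j \<notin> U \<and> T \<subseteq> insert j (U - P) then f (insert j (U - P) - T) else 0) =
    (if T \<subseteq> U \<and> P \<subseteq> U - T \<and> j \<notin> U - T then f (insert j (U - T - P)) else 0) +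
    (if j \<in> T \<and> (T - {j}) \<inter> P = {} \<and> T - {j} \<union> P \<subseteq> U then f (U - (T - {j} \<union> P)) else 0)"
    proof (cases "j \<in> U")
      case True
      have c: "(T \<subseteq> U \<and> P \<subseteq> U - T \<and> j \<notin> U - T) = ((T - {j}) \<inter> P = {} \<and> T - {j} \<union> P \<subseteq> U)"
        using True jT jP by blast
      have s: "insert j (U - T - P) = U - (T - {j} \<union> P)" using True jT jP by blast
      show ?thesis using True jT by (simp only: c s simp_thms if_False c2_double[OF two] if_cancel)
    next
      case False
      have c: "(P \<subseteq> U \<and> j \<notin> U \<and> T \<subseteq> insert j (U - P)) = ((T - {j}) \<inter> P = {} \<and> T - {j} \<union> P \<subseteq> U)"
        using False jT jP by blast
      have s: "insert j (U - P) - T = U - (T - {j} \<union> P)" using False jT by blast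
      have nT: "\<not> (T \<subseteq> U \<and> P \<subseteq> U - T \<and> j \<notin> U - T)" using False jT by blast
      show ?thesis using jT by (simp only: c s nT if_False simp_thms add_0_left)
    qed
  qed
qed

definition Kset :: "nat \<Rightarrow> nat set \<Rightarrow> nat set" where
  "Kset b T = {k. b + 3*k \<in> T \<and> (T - {b + 3*k}) \<inter> Pset b k = {}}"

lemma Kset_finite: assumes "finite T" shows "finite (Kset b T)"
proof -
  have "Kset b T \<subseteq> (\<lambda>x. (x - b) div 3) ` T"
    unfolding Kset_def by (auto intro!: image_eqI)
  then show ?thesis using assms by (auto intro: finite_subset)
qed

lemma leib:
  assumes two: "(1::'k::field) + 1 = 0" and finT: "finite T" and fin: "finite U"
  shows "vraw b (mulm T (f::'k grass)) U = mulm T (vraw b f) U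
          + (\<Sum>k\<in>Kset b T. mulm (T - {b + 3*k} \<union> Pset b k) f U)"
proof -
  define N where "N = card U"
  have KN: "(\<Sum>k\<in>Kset b T. mulm (T - {b + 3*k} \<union> Pset b k) f U)
      = (\<Sum>k\<le>N. if k \<in> Kset b T then mulm (T - {b + 3*k} \<union> Pset b k) f U else 0)"
  proof -
    have "(\<Sum>k\<le>N. if k \<in> Kset b T then mulm (T - {b + 3*k} \<union> Pset b k) f U else 0)
        = (\<Sum>k\<in>{..N} \<inter> Kset b T. mulm (T - {b + 3*k} \<union> Pset b k) f U)"
      by (simp add: sum.inter_restrict)
    also have "\<dots> = (\<Sum>k\<in>Kset b T. mulm (T - {b + 3*k} \<union> Pset b k) f U)"
    proof (rule sum.mono_neutral_left)
      show "finite (Kset b T)" using Kset_finite[OF finT] .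
      show "{..N} \<inter> Kset b T \<subseteq> Kset b T" by auto
      show "\<forall>i\<in>Kset b T - {..N} \<inter> Kset b T. mulm (T - {b + 3 * i} \<union> Pset b i) f U = 0"
      proof
        fix i assume i: "i \<in> Kset b T - {..N} \<inter> Kset b T"
        show "mulm (T - {b + 3 * i} \<union> Pset b i) f U = 0"
        proof (rule ccontr)
          assume "mulm (T - {b + 3 * i} \<union> Pset b i) f U \<noteq> 0"
          then have "Pset b i \<subseteq> U" by (auto simp: mulm_def split: if_splits)
          then have "card (Pset b i) \<le> N" unfolding N_def using fin by (rule card_mono[rotated])
          then show False using i Pset_card[of i b] by auto
        qed
      qed
    qed
    finally show ?thesis by simp
  qed
  have cN: "card (U - T) \<le> N" unfolding N_def using fin by (simp add: card_mono)
  have "vraw b (mulm T f) U = (\<Sum>k\<le>N. tm b k (mulm T f) U)"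
    unfolding N_def by (rule vraw_fin'[OF two fin])
  also have "\<dots> = (\<Sum>k\<le>N. (if T \<subseteq> U then tm b k f (U - T) else 0)
       + (if k \<in> Kset b T then mulm (T - {b + 3*k} \<union> Pset b k) f U else 0))"
  proof (rule sum.cong[OF refl])
    fix k
    have jP: "b + 3*k \<notin> Pset b k" by simp
    show "tm b k (mulm T f) U = (if T \<subseteq> U then tm b k f (U - T) else 0)
       + (if k \<in> Kset b T then mulm (T - {b + 3*k} \<union> Pset b k) f U else 0)"
      unfolding tm_def Kset_def using leib_term[OF two jP, of U T f] by simp
  qed
  also have "\<dots> = (if T \<subseteq> U then (\<Sum>k\<le>N. tm b k f (U - T)) else 0)
       + (\<Sum>k\<le>N. if k \<in> Kset b T then mulm (T - {b + 3*k} \<union> Pset b k) f U else 0)"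
    by (simp add: sum.distrib)
  also have "(if T \<subseteq> U then (\<Sum>k\<le>N. tm b k f (U - T)) else 0) = mulm T (vraw b f) U"
    using fin by (simp add: mulm_def vraw_fin[OF two _ cN])
  finally show ?thesis using KN by simp
qed




definition cbV :: "nat \<Rightarrow> nat \<Rightarrow> 'k::field grass \<Rightarrow> 'k grass" where
  "cbV a b f = vraw a (vraw b f) + vraw b (vraw a f)"

lemma cbV_sym: "cbV a b f = cbV b a f"
  unfolding cbV_def by (simp add: add.commute)

lemma cbV_same: assumes two: "(1::'k::field) + 1 = 0" shows "cbV a a (f::'k grass) = 0"
  unfolding cbV_def plus_fun_def zero_fun_def by (simp only: c2_double[OF two])

lemma Kset_pair: "a < b \<Longrightarrow> Kset b {a, a+1} = (if b = a+1 then {0} else {})"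
  unfolding Kset_def by auto

lemma Kset_self: "Kset a {a, a+1} = {0}"
  unfolding Kset_def by auto

lemma Kset_self': "Kset a {a, Suc a} = {0}"
  unfolding Kset_def by auto

lemma Kset_pair': "Kset (Suc a) {a, Suc a} = {0}"
  unfolding Kset_def by auto

lemma mulm_add_pt: "mulm T (g + h) U = mulm T g U + mulm T h U"
  by (simp add: mulm_add)

lemma cbV_step:
  assumes two: "(1::'k::field) + 1 = 0" and ab: "a < b" and fin: "finite U"
  shows "cbV a b (f::'k grass) U = mulm {a, a+1} (cbV (a+3) b f) U
     + (if b = a+1 then mulm {a} (vraw (a+3) f) U else 0)"
proof -
  define X where "X = {a, a+1}"
  define d where "d = dop a (vraw b f) U"
  define L where "L = (if b = a+1 then mulm {a} (vraw (a+3) f) U else 0)"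
  have e1: "vraw a (vraw b f) U = d + mulm X (vraw (a+3) (vraw b f)) U"
    unfolding d_def X_def by (rule vraw_rec[OF two fin])
  have "vraw b (vraw a f) U = vraw b (dop a f + mulm X (vraw (a+3) f)) U"
    unfolding X_def by (rule vraw_cong[OF two vraw_rec_feq[OF two] fin])
  also have "\<dots> = vraw b (dop a f) U + vraw b (mulm X (vraw (a+3) f)) U"
    by (rule vraw_add[OF two fin])
  also have "vraw b (dop a f) U = d"
    unfolding d_def by (rule dop_vraw[OF two ab fin, symmetric])
  also have "vraw b (mulm X (vraw (a+3) f)) U = mulm X (vraw b (vraw (a+3) f)) U
      + (\<Sum>k\<in>Kset b X. mulm (X - {b + 3*k} \<union> Pset b k) (vraw (a+3) f) U)"
    by (rule leib[OF two _ fin]) (simp add: X_def)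
  also have "(\<Sum>k\<in>Kset b X. mulm (X - {b + 3*k} \<union> Pset b k) (vraw (a+3) f) U) = L"
  proof (cases "b = a+1")
    case True
    have "X - {b + 3*0} \<union> Pset b 0 = {a}" using True unfolding X_def by auto
    then show ?thesis using True unfolding X_def L_def by (simp add: Kset_pair')
  next
    case False
    have "Kset b X = {}" unfolding X_def using Kset_pair[OF ab] False by simp
    then show ?thesis unfolding L_def using False by simp
  qed
  finally have e2: "vraw b (vraw a f) U = d + (mulm X (vraw b (vraw (a+3) f)) U + L)" .
  have "cbV a b f U = (d + d) + (mulm X (vraw (a+3) (vraw b f)) U + mulm X (vraw b (vraw (a+3) f)) U) + L"
    unfolding cbV_def using e1 e2 by (simp add: algebra_simps)
  also have "\<dots> = mulm X (cbV (a+3) b f) U + L"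
    unfolding cbV_def by (simp add: c2_double[OF two] mulm_add_pt)
  finally show ?thesis unfolding X_def L_def .
qed

lemma cbV_0:
  assumes two: "(1::'k::field) + 1 = 0"
  shows "finite U \<Longrightarrow> cbV a (a + 3*k) (f::'k grass) U = 0"
proof (induction k arbitrary: a U)
  case 0 then show ?case by (simp add: cbV_same[OF two])
next
  case (Suc k)
  have ab: "a < a + 3 * Suc k" by simp
  have "cbV a (a + 3 * Suc k) f U = mulm {a, a+1} (cbV (a+3) (a + 3 * Suc k) f) U"
    using cbV_step[OF two ab Suc.prems] by simp
  also have "\<dots> = 0"
    using Suc.IH[where a="a+3"] Suc.prems by (simp add: mulm_def algebra_simps)
  finally show ?case .
qed

lemma cbV_1:
  assumes two: "(1::'k::field) + 1 = 0" and fin: "finite U"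
  shows "cbV a (a+1) (f::'k grass) U = mulm {a} (vraw (a+3) f) U"
proof -
  have "cbV a (a+1) f U = mulm {a, a+1} (cbV (a+3) (a+1) f) U + mulm {a} (vraw (a+3) f) U"
    using cbV_step[OF two _ fin, of a "a+1"] by simp
  also have "mulm {a, a+1} (cbV (a+3) (a+1) f) U = 0"
  proof (cases "{a, a+1} \<subseteq> U")
    case True
    have fin': "finite (U - {a, a+1})" using fin by simp
    have "cbV (a+3) (a+1) f (U - {a, a+1}) = cbV (a+1) (a+3) f (U - {a, a+1})"
      by (simp add: cbV_sym)
    also have "\<dots> = mulm {a+1, a+2} (cbV (a+4) (a+3) f) (U - {a, a+1})"
      using cbV_step[OF two _ fin', of "a+1" "a+3"] by (simp add: numeral_eq_Suc)
    also have "\<dots> = 0" by (simp add: mulm_def)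
    finally show ?thesis using True by (simp add: mulm_def)
  next
    case False then show ?thesis by (auto simp: mulm_def)
  qed
  finally show ?thesis by simp
qed

lemma cbV_2:
  assumes two: "(1::'k::field) + 1 = 0" and fin: "finite U"
  shows "cbV a (a+2) (f::'k grass) U = mulm {a, a+1, a+2} (vraw (a+5) f) U"
proof -
  have "cbV a (a+2) f U = mulm {a, a+1} (cbV (a+3) (a+2) f) U"
    using cbV_step[OF two _ fin, of a "a+2"] by simp
  also have "\<dots> = mulm {a, a+1} (mulm {a+2} (vraw (a+5) f)) U"
  proof (rule mulm_cong[OF _ fin])
    show "feq (cbV (a+3) (a+2) f) (mulm {a+2} (vraw (a+5) f))"
      unfolding feq_def using cbV_1[OF two, of _ "a+2" f] by (simp add: cbV_sym numeral_eq_Suc)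
  qed
  also have "\<dots> = mulm {a, a+1, a+2} (vraw (a+5) f) U"
    by (simp add: mulm_mulm insert_commute)
  finally show ?thesis .
qed

lemma cbV_1k:
  assumes two: "(1::'k::field) + 1 = 0"
  shows "finite U \<Longrightarrow> cbV a (a + 3*k + 1) (f::'k grass) U
     = mulm (Pset a k \<union> {a + 3*k}) (vraw (a + 3*k + 3) f) U"
proof (induction k arbitrary: a U)
  case 0 then show ?case using cbV_1[OF two] by simp
next
  case (Suc k)
  have ab: "a < a + 3 * Suc k + 1" by simp
  have "cbV a (a + 3 * Suc k + 1) f U = mulm {a, a+1} (cbV (a+3) (a + 3 * Suc k + 1) f) U"
    using cbV_step[OF two ab Suc.prems] by simp
  also have "\<dots> = mulm {a, a+1} (mulm (Pset (a+3) k \<union> {a + 3 + 3*k}) (vraw (a + 3 + 3*k + 3) f)) U"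
  proof (rule mulm_cong[OF _ Suc.prems])
    show "feq (cbV (a+3) (a + 3 * Suc k + 1) f) (mulm (Pset (a+3) k \<union> {a + 3 + 3*k}) (vraw (a + 3 + 3*k + 3) f))"
      unfolding feq_def using Suc.IH[where a="a+3"] by (simp add: algebra_simps)
  qed
  also have "\<dots> = mulm (Pset a (Suc k) \<union> {a + 3 * Suc k}) (vraw (a + 3 * Suc k + 3) f) U"
  proof -
    have disj: "{a, a+1} \<inter> (Pset (a+3) k \<union> {a + 3 + 3*k}) = {}"
      using Pset_lb[of a "a+3" k] Pset_lb[of "a+1" "a+3" k] by auto
    have un: "{a, a+1} \<union> (Pset (a+3) k \<union> {a + 3 + 3*k}) = Pset a (Suc k) \<union> {a + 3 * Suc k}"
      by (auto simp: Pset_Suc')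
    show ?thesis using disj un by (simp add: mulm_mulm algebra_simps)
  qed
  finally show ?case .
qed

lemma cbV_2k:
  assumes two: "(1::'k::field) + 1 = 0"
  shows "finite U \<Longrightarrow> cbV a (a + 3*k + 2) (f::'k grass) U
     = mulm (Pset a k \<union> {a + 3*k, a + 3*k + 1, a + 3*k + 2}) (vraw (a + 3*k + 5) f) U"
proof (induction k arbitrary: a U)
  case 0 then show ?case using cbV_2[OF two] by simp
next
  case (Suc k)
  have ab: "a < a + 3 * Suc k + 2" by simp
  have "cbV a (a + 3 * Suc k + 2) f U = mulm {a, a+1} (cbV (a+3) (a + 3 * Suc k + 2) f) U"
    using cbV_step[OF two ab Suc.prems] by simp
  also have "\<dots> = mulm {a, a+1} (mulm (Pset (a+3) k \<union> {a + 3 + 3*k, a + 3 + 3*k + 1, a + 3 + 3*k + 2}) (vraw (a + 3 + 3*k + 5) f)) U"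
  proof (rule mulm_cong[OF _ Suc.prems])
    show "feq (cbV (a+3) (a + 3 * Suc k + 2) f) (mulm (Pset (a+3) k \<union> {a + 3 + 3*k, a + 3 + 3*k + 1, a + 3 + 3*k + 2}) (vraw (a + 3 + 3*k + 5) f))"
      unfolding feq_def using Suc.IH[where a="a+3"] by (simp add: algebra_simps)
  qed
  also have "\<dots> = mulm (Pset a (Suc k) \<union> {a + 3 * Suc k, a + 3 * Suc k + 1, a + 3 * Suc k + 2}) (vraw (a + 3 * Suc k + 5) f) U"
  proof -
    have disj: "{a, a+1} \<inter> (Pset (a+3) k \<union> {a + 3 + 3*k, a + 3 + 3*k + 1, a + 3 + 3*k + 2}) = {}"
      using Pset_lb[of a "a+3" k] Pset_lb[of "a+1" "a+3" k] by auto
    have un: "{a, a+1} \<union> (Pset (a+3) k \<union> {a + 3 + 3*k, a + 3 + 3*k + 1, a + 3 + 3*k + 2})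
        = Pset a (Suc k) \<union> {a + 3 * Suc k, a + 3 * Suc k + 1, a + 3 * Suc k + 2}"
      by (auto simp: Pset_Suc')
    show ?thesis using disj un by (simp add: mulm_mulm algebra_simps)
  qed
  finally show ?case .
qed

lemma vraw_sq:
  assumes two: "(1::'k::field) + 1 = 0" and fin: "finite U"
  shows "vraw a (vraw a (f::'k grass)) U = mulm {a+1} (vraw (a+3) f) U"
proof -
  define X where "X = {a, a+1}"
  define g where "g = vraw (a+3) f"
  have finX: "finite X" unfolding X_def by simp
  have "vraw a (vraw a f) U = vraw a (dop a f + mulm X g) U"
    unfolding X_def g_def by (rule vraw_cong[OF two vraw_rec_feq[OF two] fin])
  also have "\<dots> = vraw a (dop a f) U + vraw a (mulm X g) U"
    by (rule vraw_add[OF two fin])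
  also have "vraw a (dop a f) U = dop a (dop a f) U + mulm X (vraw (a+3) (dop a f)) U"
    unfolding X_def by (rule vraw_rec[OF two fin])
  also have "dop a (dop a f) U = 0" by (rule dop_dop[OF two])
  also have "vraw a (mulm X g) U = mulm X (vraw a g) U
      + (\<Sum>k\<in>Kset a X. mulm (X - {a + 3*k} \<union> Pset a k) g U)"
    by (rule leib[OF two finX fin])
  also have "(\<Sum>k\<in>Kset a X. mulm (X - {a + 3*k} \<union> Pset a k) g U) = mulm {a+1} g U"
  proof -
    have "X - {a + 3*0} \<union> Pset a 0 = {a+1}" unfolding X_def by auto
    then show ?thesis unfolding X_def by (simp add: Kset_self')
  qed
  also have "mulm X (vraw a g) U = mulm X (dop a g + mulm X (vraw (a+3) g)) U"
    unfolding X_def by (rule mulm_cong[OF vraw_rec_feq[OF two] fin])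
  also have "\<dots> = mulm X (dop a g) U"
    by (simp add: mulm_add_pt mulm_mulm X_def)
  also have "mulm X (dop a g) U = mulm X (vraw (a+3) (dop a f)) U"
  proof (rule mulm_cong[OF _ fin])
    show "feq (dop a g) (vraw (a+3) (dop a f))"
      unfolding feq_def g_def using dop_vraw[OF two, of a "a+3"] by simp
  qed
  finally show ?thesis unfolding g_def by (simp add: c2_double[OF two] add.assoc[symmetric])
qed




definition Dset :: "nat \<Rightarrow> nat \<Rightarrow> nat set" where
  "Dset a b = (if (b - a) mod 3 = 1 then Pset a ((b - a) div 3) \<union> {a + 3*((b - a) div 3)}
     else Pset a ((b - a) div 3) \<union> {a + 3*((b - a) div 3), a + 3*((b - a) div 3) + 1, a + 3*((b - a) div 3) + 2})"

definition Dm :: "nat \<Rightarrow> nat \<Rightarrow> nat" where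
  "Dm a b = (if (b - a) mod 3 = 1 then b + 2 else b + 3)"

lemma diff_diff_un: "A - B - C = A - (B \<union> C)" by auto

lemma Dset_finite[simp]: "finite (Dset a b)"
  unfolding Dset_def by simp

lemma cbV_formula:
  assumes two: "(1::'k::field) + 1 = 0" and ab: "a \<le> b" and fin: "finite U"
  shows "cbV a b (f::'k grass) U = (if (b - a) mod 3 = 0 then 0 else mulm (Dset a b) (vraw (Dm a b) f) U)"
proof -
  define k where "k = (b - a) div 3"
  define r where "r = (b - a) mod 3"
  have b: "b = a + 3*k + r" unfolding k_def r_def using ab by simp
  have "r = 0 \<or> r = 1 \<or> r = 2" unfolding r_def by linarith
  moreover {
    assume r: "r = 0"
    then have ?thesis using cbV_0[OF two fin, of a k f] b r unfolding r_def by simp }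
  moreover {
    assume r: "r = 1"
    have e: "a + 3*k + 3 = b + 2" "a + 3*k + 1 = b" using b r by simp_all
    have ?thesis using cbV_1k[OF two fin, of a k f] r unfolding e r_def
      by (simp add: Dset_def Dm_def k_def[symmetric] r_def[symmetric] r) }
  moreover {
    assume r: "r = 2"
    have e: "a + 3*k + 5 = b + 3" "a + 3*k + 2 = b" using b r by simp_all
    have e2: "Suc (Suc (a + 3 * k)) = b" using e by simp
    have ?thesis using cbV_2k[OF two fin, of a k f] r unfolding e r_def
      by (simp add: Dset_def Dm_def k_def[symmetric] r_def[symmetric] r e2) }
  ultimately show ?thesis by blast
qed

definition Mop :: "nat set \<Rightarrow> nat \<Rightarrow> 'k::field op" where
  "Mop T n f = mulm T (vraw n f)"

definition E :: "nat set \<Rightarrow> nat \<Rightarrow> 'k::field op" where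
  "E T n = restr (Mop T n)"

lemma sum_feq: "feq (\<Sum>k\<in>K. F k) (\<Sum>k\<in>K. G k)" if "\<And>k. k \<in> K \<Longrightarrow> feq (F k) (G k)"
  using that unfolding feq_def by (simp add: sum_fun_app)

lemma leib_feq:
  assumes two: "(1::'k::field) + 1 = 0" and finT: "finite T"
  shows "feq (vraw b (mulm T (f::'k grass))) (mulm T (vraw b f)
          + (\<Sum>k\<in>Kset b T. mulm (T - {b + 3*k} \<union> Pset b k) f))"
  unfolding feq_def using leib[OF two finT] by (simp add: sum_fun_app)

lemma cbM_formula:
  assumes two: "(1::'k::field) + 1 = 0" and finA: "finite A" and finB: "finite B"
    and ab: "a \<le> b" and Ab: "\<forall>i\<in>A. i < b" and fin: "finite U"
  shows "Mop A a (Mop B b f) U + Mop B b (Mop A a (f::'k grass)) U =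
     (if A \<inter> B = {} then mulm (A \<union> B) (cbV a b f) U else 0)
     + (\<Sum>k\<in>Kset a B. if A \<inter> (B - {a + 3*k} \<union> Pset a k) = {}
          then mulm (A \<union> (B - {a + 3*k} \<union> Pset a k)) (vraw b f) U else 0)"
proof -
  define g where "g = vraw b f"
  have "Mop A a (Mop B b f) U = mulm A (vraw a (mulm B g)) U"
    unfolding Mop_def g_def ..
  also have "\<dots> = mulm A (mulm B (vraw a g) + (\<Sum>k\<in>Kset a B. mulm (B - {a + 3*k} \<union> Pset a k) g)) U"
    by (rule mulm_cong[OF leib_feq[OF two finB] fin])
  also have "\<dots> = mulm A (mulm B (vraw a g)) U + (\<Sum>k\<in>Kset a B. mulm A (mulm (B - {a + 3*k} \<union> Pset a k) g) U)"
    by (simp add: mulm_add_pt mulm_sum sum_fun_app)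
  also have "(\<Sum>k\<in>Kset a B. mulm A (mulm (B - {a + 3*k} \<union> Pset a k) g) U)
     = (\<Sum>k\<in>Kset a B. if A \<inter> (B - {a + 3*k} \<union> Pset a k) = {}
          then mulm (A \<union> (B - {a + 3*k} \<union> Pset a k)) (vraw b f) U else 0)"
    unfolding g_def by (rule sum.cong) (auto simp: mulm_mulm)
  finally have e1: "Mop A a (Mop B b f) U = mulm A (mulm B (vraw a g)) U + (\<Sum>k\<in>Kset a B. if A \<inter> (B - {a + 3*k} \<union> Pset a k) = {}
          then mulm (A \<union> (B - {a + 3*k} \<union> Pset a k)) (vraw b f) U else 0)" .
  have KA: "Kset b A = {}" unfolding Kset_def using Ab by auto
  have "Mop B b (Mop A a f) U = mulm B (vraw b (mulm A (vraw a f))) U"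
    unfolding Mop_def ..
  also have "\<dots> = mulm B (mulm A (vraw b (vraw a f)) + (\<Sum>k\<in>Kset b A. mulm (A - {b + 3*k} \<union> Pset b k) (vraw a f))) U"
    by (rule mulm_cong[OF leib_feq[OF two finA] fin])
  also have "\<dots> = mulm B (mulm A (vraw b (vraw a f))) U"
    using KA by simp
  finally have e2: "Mop B b (Mop A a f) U = mulm B (mulm A (vraw b (vraw a f))) U" .
  have e3: "mulm A (mulm B (vraw a g)) U + mulm B (mulm A (vraw b (vraw a f))) U
      = (if A \<inter> B = {} then mulm (A \<union> B) (cbV a b f) U else 0)"
    unfolding g_def cbV_def by (auto simp: mulm_mulm mulm_add_pt Int_commute Un_commute)
  show ?thesis using e1 e2 e3 by (simp add: algebra_simps)
qed

lemma cbM_formula2: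
  assumes two: "(1::'k::field) + 1 = 0" and finA: "finite A" and finB: "finite B"
    and ab: "a \<le> b" and Ab: "\<forall>i\<in>A. i < b" and fin: "finite U"
  shows "Mop A a (Mop B b f) U + Mop B b (Mop A a (f::'k grass)) U =
     (if A \<inter> B = {} \<and> (b - a) mod 3 \<noteq> 0 \<and> (A \<union> B) \<inter> Dset a b = {}
        then Mop (A \<union> B \<union> Dset a b) (Dm a b) f U else 0)
     + (\<Sum>k\<in>Kset a B. if A \<inter> (B - {a + 3*k} \<union> Pset a k) = {}
          then Mop (A \<union> (B - {a + 3*k} \<union> Pset a k)) b f U else 0)"
proof -
  have "(if A \<inter> B = {} then mulm (A \<union> B) (cbV a b f) U else 0)
     = (if A \<inter> B = {} \<and> (b - a) mod 3 \<noteq> 0 \<and> (A \<union> B) \<inter> Dset a b = {}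
        then Mop (A \<union> B \<union> Dset a b) (Dm a b) f U else 0)"
  proof (cases "A \<inter> B = {}")
    case True
    have "mulm (A \<union> B) (cbV a b f) U
        = mulm (A \<union> B) (\<lambda>V. if (b - a) mod 3 = 0 then 0 else mulm (Dset a b) (vraw (Dm a b) f) V) U"
      by (rule mulm_cong[OF _ fin]) (auto simp: feq_def cbV_formula[OF two ab])
    also have "\<dots> = (if (b - a) mod 3 \<noteq> 0 \<and> (A \<union> B) \<inter> Dset a b = {}
        then Mop (A \<union> B \<union> Dset a b) (Dm a b) f U else 0)"
      by (cases "(b - a) mod 3 = 0") (auto simp: Mop_def mulm_mulm[unfolded fun_eq_iff] mulm_def diff_diff_un)
    finally show ?thesis using True by simp
  qed simp
  then show ?thesis using cbM_formula[OF two finA finB ab Ab fin, of f] unfolding Mop_def by simp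
qed




lemma k_minus_c2: assumes two: "(1::'k::field) + 1 = 0" shows "(x::'k) - y = x + y"
proof -
  have "x - y = x + (- y)" by simp
  then show ?thesis using c2_neg[OF two, of y] by simp
qed

lemma grass_minus_c2: assumes two: "(1::'k::field) + 1 = 0" shows "(g::'k grass) - h = g + h"
proof (rule ext)
  fix U show "(g - h) U = (g + h) U"
    unfolding fun_diff_def plus_fun_def using k_minus_c2[OF two] by simp
qed

lemma op_minus_c2: assumes two: "(1::'k::field) + 1 = 0" shows "(F::'k op) - G = F + G"
proof (rule ext)
  fix f show "(F - G) f = (F + G) f"
    unfolding fun_diff_def[of F G] plus_fun_def[of F G] using grass_minus_c2[OF two] by simp
qed

lemma Mop_Lam: "(1::'k::field) + 1 = 0 \<Longrightarrow> finite T \<Longrightarrow> (f::'k grass) \<in> Lam \<Longrightarrow> Mop T n f \<in> Lam"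
  unfolding Mop_def by (intro mulm_Lam vraw_Lam)

lemma Mop_zero[simp]: "(1::'k::field) + 1 = 0 \<Longrightarrow> Mop T n (0::'k grass) = 0"
  unfolding Mop_def by simp

lemma Mop_infz: "(1::'k::field) + 1 = 0 \<Longrightarrow> finite T \<Longrightarrow> infz (f::'k grass) \<Longrightarrow> infz (Mop T n f)"
  unfolding Mop_def by (intro mulm_infz vraw_infz)

lemma restr_eq_fin:
  assumes "\<And>f U. f \<in> Lam \<Longrightarrow> finite U \<Longrightarrow> X f U = Y f U"
    and "\<And>f. f \<in> Lam \<Longrightarrow> infz (X f)" and "\<And>f. f \<in> Lam \<Longrightarrow> infz (Y f)"
  shows "restr X = restr (Y :: 'k::field op)"
proof (rule ext)
  fix f show "restr X f = restr Y f"
  proof (cases "f \<in> Lam")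
    case True
    have "X f U = Y f U" for U
      using assms[of f] True unfolding infz_def by (cases "finite U") auto
    then show ?thesis using True unfolding restr_def by auto
  qed (simp add: restr_def)
qed

lemma restr_add: "restr (X + Y) = restr X + restr (Y :: 'k::field op)"
  by (rule ext) (simp add: restr_def)

lemma restr_zero[simp]: "restr (0::'k::field op) = 0"
  by (rule ext) (simp add: restr_def)

lemma restr_sum: "restr (\<Sum>k\<in>K. (X k :: 'k::field op)) = (\<Sum>k\<in>K. restr (X k))"
proof (induction K rule: infinite_finite_induct)
  case (infinite A) then show ?case by (simp only: sum.infinite[OF infinite] restr_zero)
next
  case empty then show ?case by (simp only: sum.empty restr_zero)
next
  case (insert x F)
  then show ?case by (simp only: sum.insert[OF insert(1,2)] restr_add)
qed

lemma restr_if: "restr (if c then X else 0) = (if c then restr X else (0::'k::field op))"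
  by simp

lemma if_op_app: "(if c then (F::'k::field op) else 0) f U = (if c then F f U else 0)"
  by (cases c) auto

lemma E_apply: "(1::'k::field) + 1 = 0 \<Longrightarrow> (f::'k grass) \<in> Lam \<Longrightarrow> E T n f = Mop T n f"
  unfolding E_def restr_def by simp

lemma E_notLam: "(f::'k::field grass) \<notin> Lam \<Longrightarrow> E T n f = 0"
  unfolding E_def restr_def by simp

lemma E_zero: "(1::'k::field) + 1 = 0 \<Longrightarrow> E T n (0::'k grass) = 0"
  unfolding E_def restr_def by simp

lemma brk_E:
  assumes two: "(1::'k::field) + 1 = 0" and finA: "finite A" and finB: "finite B"
  shows "brk (E A a) (E B b :: 'k op) = restr (\<lambda>f. Mop A a (Mop B b f) + Mop B b (Mop A a f))"
proof (rule ext)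
  fix f :: "'k grass"
  show "brk (E A a) (E B b) f = restr (\<lambda>f. Mop A a (Mop B b f) + Mop B b (Mop A a f)) f"
  proof (cases "f \<in> Lam")
    case True
    have l1: "Mop B b f \<in> Lam" "Mop A a f \<in> Lam" using Mop_Lam[OF two] finA finB True by auto
    show ?thesis unfolding brk_def using True l1
      by (simp add: E_apply[OF two] restr_def grass_minus_c2[OF two])
  next
    case False
    then show ?thesis unfolding brk_def by (simp add: E_notLam E_zero[OF two] restr_def)
  qed
qed

lemma bracket_E:
  assumes two: "(1::'k::field) + 1 = 0" and finA: "finite A" and finB: "finite B"
    and ab: "a \<le> b" and Ab: "\<forall>i\<in>A. i < b"
  shows "brk (E A a) (E B b :: 'k op) =
     (if A \<inter> B = {} \<and> (b - a) mod 3 \<noteq> 0 \<and> (A \<union> B) \<inter> Dset a b = {}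
        then E (A \<union> B \<union> Dset a b) (Dm a b) else 0)
     + (\<Sum>k\<in>Kset a B. if A \<inter> (B - {a + 3*k} \<union> Pset a k) = {}
          then E (A \<union> (B - {a + 3*k} \<union> Pset a k)) b else 0)"
proof -
  define C where "C = (A \<inter> B = {} \<and> (b - a) mod 3 \<noteq> 0 \<and> (A \<union> B) \<inter> Dset a b = {})"
  define S where "S = A \<union> B \<union> Dset a b"
  define c where "c = (\<lambda>k. A \<inter> (B - {a + 3*k} \<union> Pset a k) = {})"
  define Sk where "Sk = (\<lambda>k. A \<union> (B - {a + 3*k} \<union> Pset a k))"
  define R :: "'k op" where "R = (if C then Mop S (Dm a b) else 0) + (\<Sum>k\<in>Kset a B. if c k then Mop (Sk k) b else 0)"
  have finS: "finite S" "\<And>k. finite (Sk k)" unfolding S_def Sk_def using finA finB by auto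
  have RE: "restr R = (if C then E S (Dm a b) else 0) + (\<Sum>k\<in>Kset a B. if c k then E (Sk k) b else 0)"
    unfolding R_def restr_add restr_sum restr_if E_def by simp
  have Rpt: "R f U = (if C then Mop S (Dm a b) f U else 0) + (\<Sum>k\<in>Kset a B. if c k then Mop (Sk k) b f U else 0)" for f U
    unfolding R_def plus_fun_def sum_fun_app if_op_app by simp
  have "restr (\<lambda>f. Mop A a (Mop B b f) + Mop B b (Mop A a f)) = restr R"
  proof (rule restr_eq_fin)
    fix f :: "'k grass" and U :: "nat set" assume "f \<in> Lam" "finite U"
    then show "(Mop A a (Mop B b f) + Mop B b (Mop A a f)) U = R f U"
      unfolding Rpt C_def S_def c_def Sk_def using cbM_formula2[OF two finA finB ab Ab, of U] by simp
  next
    fix f :: "'k grass" assume f: "f \<in> Lam"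
    show "infz (Mop A a (Mop B b f) + Mop B b (Mop A a f))"
      using f finA finB by (intro infz_add Mop_infz[OF two] Lam_infz) auto
    have "infz (R f)"
      unfolding infz_def
    proof (intro allI impI)
      fix U :: "nat set" assume U: "infinite U"
      have "infz (Mop S (Dm a b) f)" "\<And>k. infz (Mop (Sk k) b f)"
        using Mop_infz[OF two finS(1) Lam_infz[OF f]] Mop_infz[OF two finS(2) Lam_infz[OF f]] by auto
      then show "R f U = 0" unfolding Rpt using U by (auto simp: infz_def intro!: sum.neutral)
    qed
    then show "infz (R f)" .
  qed
  then show ?thesis unfolding brk_E[OF two finA finB] RE C_def S_def c_def Sk_def .
qed




interpretation sclm: module "scl :: 'k::field \<Rightarrow> 'k op \<Rightarrow> 'k op"
  by standard (auto simp: scl_def fun_eq_iff algebra_simps)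

definition linop :: "'k::field op \<Rightarrow> bool" where
  "linop A \<longleftrightarrow> (\<forall>f. f \<notin> Lam \<longrightarrow> A f = 0) \<and> (\<forall>f\<in>Lam. A f \<in> Lam)
     \<and> (\<forall>f\<in>Lam. \<forall>g\<in>Lam. A (f + g) = A f + A g)
     \<and> (\<forall>c. \<forall>f\<in>Lam. A (\<lambda>S. c * f S) = (\<lambda>S. c * A f S))"

lemma linopD:
  assumes "linop A"
  shows "\<And>f. f \<notin> Lam \<Longrightarrow> A f = 0" "\<And>f. f \<in> Lam \<Longrightarrow> A f \<in> Lam"
    "\<And>f g. f \<in> Lam \<Longrightarrow> g \<in> Lam \<Longrightarrow> A (f + g) = A f + A g"
    "\<And>c f. f \<in> Lam \<Longrightarrow> A (\<lambda>S. c * f S) = (\<lambda>S. c * A f S)"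
  using assms unfolding linop_def by auto

lemma linop_zero_arg: assumes "linop A" shows "A 0 = 0"
proof -
  have "A (0 + 0) = A 0 + A 0" by (rule linopD(3)[OF assms Lam_zero(1) Lam_zero(1)])
  then have "A 0 = A 0 + A 0" by (simp only: add_0_left)
  then show ?thesis by (metis add_cancel_right_right)
qed

lemma linop_neg: assumes "linop A" "f \<in> Lam" shows "A (- f) = - A f"
proof -
  have e: "- f = (\<lambda>S. (-1) * f S)" by (rule ext) simp
  have "A (\<lambda>S. (-1) * f S) = (\<lambda>S. (-1) * A f S)" using linopD(4)[OF assms(1) assms(2)] .
  also have "\<dots> = - A f" by (rule ext) simp
  finally show ?thesis unfolding e .
qed

lemma linop_diff: assumes "linop A" "f \<in> Lam" "g \<in> Lam" shows "A (f - g) = A f - A g"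
proof -
  have "A (f - g) = A (f + - g)" by (simp only: diff_conv_add_uminus)
  also have "\<dots> = A f + A (- g)" by (rule linopD(3)[OF assms(1) assms(2) Lam_uminus[OF assms(3)]])
  also have "\<dots> = A f - A g" by (simp only: linop_neg[OF assms(1,3)] diff_conv_add_uminus)
  finally show ?thesis .
qed

lemma Lam_sum: "(\<And>k. k \<in> K \<Longrightarrow> g k \<in> Lam) \<Longrightarrow> (\<Sum>k\<in>K. g k) \<in> Lam"
proof (induction K rule: infinite_finite_induct)
  case (insert x F)
  have "g x + sum g F \<in> Lam" using insert by (intro Lam_add) auto
  then show ?case by (simp only: sum.insert[OF insert(1,2)])
qed auto

lemma linop_sum_arg:
  assumes "linop A" "\<And>k. k \<in> K \<Longrightarrow> g k \<in> Lam"
  shows "A (\<Sum>k\<in>K. g k) = (\<Sum>k\<in>K. A (g k))"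
  using assms(2)
proof (induction K rule: infinite_finite_induct)
  case (infinite K) then show ?case by (simp only: sum.infinite[OF infinite(1)] linop_zero_arg[OF assms(1)])
next
  case empty then show ?case by (simp only: sum.empty linop_zero_arg[OF assms(1)])
next
  case (insert x F)
  have F: "(\<Sum>k\<in>F. g k) \<in> Lam" using insert.prems by (intro Lam_sum) auto
  have "A (\<Sum>k\<in>insert x F. g k) = A (g x + (\<Sum>k\<in>F. g k))" by (simp only: sum.insert[OF insert(1,2)])
  also have "\<dots> = A (g x) + A (\<Sum>k\<in>F. g k)" using insert.prems F by (intro linopD(3)[OF assms(1)]) auto
  also have "\<dots> = (\<Sum>k\<in>insert x F. A (g k))" using insert by (simp only: sum.insert[OF insert(1,2)]) auto
  finally show ?case .
qed

lemma linop_0: "linop (0 :: 'k::field op)"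
  unfolding linop_def by (simp add: fun_eq_iff)

lemma linop_add: assumes A: "linop A" and B: "linop B" shows "linop (A + B)"
  unfolding linop_def
proof (intro conjI allI ballI impI)
  fix f :: "'a grass" assume "f \<notin> Lam" then show "(A + B) f = 0"
    using linopD(1)[OF A] linopD(1)[OF B] by simp
next
  fix f :: "'a grass" assume "f \<in> Lam" then show "(A + B) f \<in> Lam"
    using linopD(2)[OF A] linopD(2)[OF B] by (simp add: Lam_add)
next
  fix f g :: "'a grass" assume "f \<in> Lam" "g \<in> Lam" then show "(A + B) (f + g) = (A + B) f + (A + B) g"
    using linopD(3)[OF A] linopD(3)[OF B] by (simp add: add_ac)
next
  fix c :: 'a and f :: "'a grass" assume "f \<in> Lam" then show "(A + B) (\<lambda>S. c * f S) = (\<lambda>S. c * (A + B) f S)"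
    using linopD(4)[OF A] linopD(4)[OF B] by (simp add: fun_eq_iff distrib_left)
qed

lemma linop_uminus: assumes A: "linop A" shows "linop (- A)"
  unfolding linop_def
proof (intro conjI allI ballI impI)
  fix f :: "'a grass" assume "f \<notin> Lam" then show "(- A) f = 0"
    using linopD(1)[OF A] by simp
next
  fix f :: "'a grass" assume "f \<in> Lam" then show "(- A) f \<in> Lam"
    using linopD(2)[OF A] by (simp add: Lam_uminus)
next
  fix f g :: "'a grass" assume "f \<in> Lam" "g \<in> Lam" then show "(- A) (f + g) = (- A) f + (- A) g"
    using linopD(3)[OF A] by simp
next
  fix c :: 'a and f :: "'a grass" assume "f \<in> Lam" then show "(- A) (\<lambda>S. c * f S) = (\<lambda>S. c * (- A) f S)"
    using linopD(4)[OF A] by (simp add: fun_eq_iff)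
qed

lemma linop_scl: assumes A: "linop A" shows "linop (scl c A)"
  unfolding linop_def
proof (intro conjI allI ballI impI)
  fix f :: "'a grass" assume "f \<notin> Lam" then show "scl c A f = 0"
    using linopD(1)[OF A] by (simp add: scl_def fun_eq_iff)
next
  fix f :: "'a grass" assume "f \<in> Lam" then show "scl c A f \<in> Lam"
    using linopD(2)[OF A] by (simp add: scl_def Lam_scale)
next
  fix f g :: "'a grass" assume "f \<in> Lam" "g \<in> Lam" then show "scl c A (f + g) = scl c A f + scl c A g"
    using linopD(3)[OF A] by (simp add: scl_def fun_eq_iff distrib_left)
next
  fix d :: 'a and f :: "'a grass" assume "f \<in> Lam" then show "scl c A (\<lambda>S. d * f S) = (\<lambda>S. d * scl c A f S)"
    using linopD(4)[OF A] by (simp add: scl_def fun_eq_iff mult.left_commute)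
qed

lemma linop_comp: assumes A: "linop A" and B: "linop B" shows "linop (A \<circ> B)"
  unfolding linop_def
proof (intro conjI allI ballI impI)
  fix f :: "'a grass" assume "f \<notin> Lam" then show "(A \<circ> B) f = 0"
    using linopD(1)[OF B] linop_zero_arg[OF A] by simp
next
  fix f :: "'a grass" assume "f \<in> Lam" then show "(A \<circ> B) f \<in> Lam"
    using linopD(2)[OF A] linopD(2)[OF B] by simp
next
  fix f g :: "'a grass" assume "f \<in> Lam" "g \<in> Lam" then show "(A \<circ> B) (f + g) = (A \<circ> B) f + (A \<circ> B) g"
    using linopD(3)[OF A] linopD(3)[OF B] linopD(2)[OF B] by simp
next
  fix c :: 'a and f :: "'a grass" assume "f \<in> Lam" then show "(A \<circ> B) (\<lambda>S. c * f S) = (\<lambda>S. c * (A \<circ> B) f S)"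
    using linopD(4)[OF A] linopD(4)[OF B] linopD(2)[OF B] by simp
qed

lemma linop_diff_op: "linop A \<Longrightarrow> linop B \<Longrightarrow> linop (A - B)"
  unfolding diff_conv_add_uminus by (intro linop_add linop_uminus)

lemma linop_brk: "linop A \<Longrightarrow> linop B \<Longrightarrow> linop (brk A B)"
  unfolding brk_def by (intro linop_diff_op linop_comp)

lemma linop_sq: "linop A \<Longrightarrow> linop (sq A)"
  unfolding sq_def by (rule linop_comp)

lemma linop_sum: "(\<And>k. k \<in> K \<Longrightarrow> linop (X k)) \<Longrightarrow> linop (\<Sum>k\<in>K. X k)"
proof (induction K rule: infinite_finite_induct)
  case (infinite K) then show ?case by (simp only: sum.infinite[OF infinite(1)] linop_0)
next
  case empty then show ?case by (simp only: sum.empty linop_0)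
next
  case (insert x F) then show ?case by (simp only: sum.insert[OF insert(1,2)]) (intro linop_add; auto)
qed

lemma linop_span: "(\<And>b. b \<in> B \<Longrightarrow> linop b) \<Longrightarrow> x \<in> sclm.span B \<Longrightarrow> linop x"
proof -
  assume b: "\<And>b. b \<in> B \<Longrightarrow> linop b" and x: "x \<in> sclm.span B"
  from x show "linop x"
  proof (induction rule: sclm.span_induct_alt)
    case base show ?case by (rule linop_0)
  next
    case (step c x y) show ?case by (rule linop_add[OF linop_scl[OF b[OF step(1)]] step(2)])
  qed
qed

lemma Lam_eq_fin:
  assumes "f \<in> Lam" "g \<in> Lam" "\<And>U. finite U \<Longrightarrow> f U = g U"
  shows "f = g"
proof (rule ext)
  fix U show "f U = g U"
    using assms Lam_infz[OF assms(1)] Lam_infz[OF assms(2)] unfolding infz_def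
    by (cases "finite U") auto
qed

lemma linop_E:
  assumes two: "(1::'k::field) + 1 = 0" and fin: "finite T"
  shows "linop (E T n :: 'k op)"
  unfolding linop_def
proof (intro conjI ballI allI impI)
  fix f :: "'k grass" assume "f \<notin> Lam" then show "E T n f = 0" by (rule E_notLam)
next
  fix f :: "'k grass" assume f: "f \<in> Lam"
  then show "E T n f \<in> Lam" by (simp add: E_apply[OF two] Mop_Lam[OF two fin])
next
  fix f g :: "'k grass" assume f: "f \<in> Lam" and g: "g \<in> Lam"
  have fg: "f + g \<in> Lam" using f g by (rule Lam_add)
  show "E T n (f + g) = E T n f + E T n g"
    unfolding E_apply[OF two f] E_apply[OF two g] E_apply[OF two fg]
  proof (rule Lam_eq_fin)
    show "Mop T n (f + g) \<in> Lam" using fg by (rule Mop_Lam[OF two fin])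
    show "Mop T n f + Mop T n g \<in> Lam" using f g by (intro Lam_add Mop_Lam[OF two fin])
    fix U :: "nat set" assume U: "finite U"
    show "Mop T n (f + g) U = (Mop T n f + Mop T n g) U"
      using U unfolding Mop_def mulm_def by (simp add: vraw_add[OF two])
  qed
next
  fix c :: 'k and f :: "'k grass" assume f: "f \<in> Lam"
  have cf: "(\<lambda>S. c * f S) \<in> Lam" using f by (rule Lam_scale)
  show "E T n (\<lambda>S. c * f S) = (\<lambda>S. c * E T n f S)"
    unfolding E_apply[OF two f] E_apply[OF two cf]
  proof (rule Lam_eq_fin)
    show "Mop T n (\<lambda>S. c * f S) \<in> Lam" using cf by (rule Mop_Lam[OF two fin])
    show "(\<lambda>S. c * Mop T n f S) \<in> Lam" using f by (intro Lam_scale Mop_Lam[OF two fin])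
    fix U :: "nat set" assume U: "finite U"
    show "Mop T n (\<lambda>S. c * f S) U = c * Mop T n f U"
      using U unfolding Mop_def mulm_def by (simp add: vraw_scale[OF two])
  qed
qed

lemma brk_add_left:
  assumes "linop x" "linop y" "linop z"
  shows "brk (x + y) z = brk x z + brk y (z :: 'k::field op)"
proof (rule ext)
  fix f :: "'k grass"
  show "brk (x + y) z f = (brk x z + brk y z) f"
  proof (cases "f \<in> Lam")
    case True
    have "z (x f + y f) = z (x f) + z (y f)"
      using linopD(3)[OF assms(3)] linopD(2)[OF assms(1) True] linopD(2)[OF assms(2) True] by simp
    then show ?thesis unfolding brk_def by (simp add: algebra_simps)
  next
    case False
    then show ?thesis unfolding brk_def
      using linopD(1)[OF assms(1) False] linopD(1)[OF assms(2) False] linopD(1)[OF assms(3) False]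
        linop_zero_arg[OF assms(1)] linop_zero_arg[OF assms(2)] linop_zero_arg[OF assms(3)]
      by simp
  qed
qed

lemma brk_scl_left:
  assumes "linop x" "linop z"
  shows "brk (scl c x) z = scl c (brk x (z :: 'k::field op))"
proof (rule ext)
  fix f :: "'k grass"
  show "brk (scl c x) z f = scl c (brk x z) f"
  proof (cases "f \<in> Lam")
    case True
    have "z (\<lambda>S. c * x f S) = (\<lambda>S. c * z (x f) S)"
      using linopD(4)[OF assms(2) linopD(2)[OF assms(1) True]] .
    then show ?thesis unfolding brk_def scl_def by (simp add: algebra_simps fun_eq_iff)
  next
    case False
    have sx: "linop (scl c x)" by (rule linop_scl[OF assms(1)])
    have "brk (scl c x) z f = 0"
      using linopD(1)[OF sx False] linopD(1)[OF assms(2) False]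
        linop_zero_arg[OF sx] linop_zero_arg[OF assms(2)] unfolding brk_def by simp
    moreover have "scl c (brk x z) f = 0"
      using linopD(1)[OF linop_scl[OF linop_brk[OF assms]] False] .
    ultimately show ?thesis by simp
  qed
qed

lemma brk_antisym: "brk x y = - brk y (x :: 'k::field op)"
  unfolding brk_def by simp

lemma brk_zero_left: "linop z \<Longrightarrow> brk 0 z = (0 :: 'k::field op)"
  unfolding brk_def using linop_zero_arg by (auto simp: fun_eq_iff)

lemma span_brk_left:
  assumes lB: "\<And>b. b \<in> B \<Longrightarrow> linop b" and lz: "linop z"
    and bz: "\<And>b. b \<in> B \<Longrightarrow> brk b z \<in> sclm.span B"
    and x: "x \<in> sclm.span B"
  shows "brk x (z :: 'k::field op) \<in> sclm.span B"
proof -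
  from x have "linop x \<and> brk x z \<in> sclm.span B"
  proof (induction rule: sclm.span_induct_alt)
    case base then show ?case unfolding brk_zero_left[OF lz] using linop_0 sclm.span_zero by blast
  next
    case (step c b y)
    have lb: "linop b" using lB step(1) .
    have ly: "linop y" using step(2) by blast
    have e: "brk (scl c b + y) z = scl c (brk b z) + brk y z"
      by (simp only: brk_add_left[OF linop_scl[OF lb] ly lz] brk_scl_left[OF lb lz])
    have m: "scl c (brk b z) + brk y z \<in> sclm.span B"
      using step(2) bz[OF step(1)] by (intro sclm.span_add sclm.span_scale) auto
    show ?case
    proof (intro conjI)
      show "linop (scl c b + y)" by (rule linop_add[OF linop_scl[OF lb] ly])
      show "brk (scl c b + y) z \<in> sclm.span B" unfolding e by (rule m)
    qed
  qed
  then show ?thesis by blast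
qed

lemma span_brk:
  assumes lB: "\<And>b. b \<in> B \<Longrightarrow> linop b"
    and bb: "\<And>b b'. b \<in> B \<Longrightarrow> b' \<in> B \<Longrightarrow> brk b b' \<in> sclm.span B"
    and x: "x \<in> sclm.span B" and y: "y \<in> sclm.span B"
  shows "brk x (y :: 'k::field op) \<in> sclm.span B"
proof -
  have yB: "brk b y \<in> sclm.span B" if b: "b \<in> B" for b
  proof -
    have "brk y b \<in> sclm.span B"
      by (rule span_brk_left[OF lB lB[OF b] bb[OF _ b] y])
    then have "- brk y b \<in> sclm.span B" by (rule sclm.span_neg)
    then show ?thesis by (simp add: brk_antisym[of b y])
  qed
  show ?thesis by (rule span_brk_left[OF lB linop_span[OF lB y] yB x])
qed




definition allowed :: "nat set \<Rightarrow> nat \<Rightarrow> bool" where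
  "allowed T n \<longleftrightarrow> T \<subseteq> {i. i + 3 \<le> n} \<and> \<not> (n = 4 \<and> 0 \<in> T) \<and> \<not> (n = 7 \<and> 0 \<in> T \<and> 3 \<in> T)"

definition Std :: "'k::field op set" where
  "Std = {E T n | T n. allowed T n}"

lemma allowed_finite: "allowed T n \<Longrightarrow> finite T"
  unfolding allowed_def by (rule finite_subset[of _ "{..<n}"]) auto

lemma allowed_bound: "allowed T n \<Longrightarrow> i \<in> T \<Longrightarrow> i + 3 \<le> n"
  unfolding allowed_def by auto

lemma E_in_Std: "allowed T n \<Longrightarrow> E T n \<in> Std"
  unfolding Std_def by blast

lemma std1_eq:
  assumes two: "(1::'k::field) + 1 = 0"
  shows "(std1 :: 'k op set) = Std"
proof -
  have h: "restr (monop T \<circ> vraw n) = (E T n :: 'k op)" if "allowed T n" for T n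
  proof -
    have "finite T" using that by (rule allowed_finite)
    then have "(monop T \<circ> vraw n :: 'k op) = Mop T n"
      by (simp add: fun_eq_iff monop_eq[OF two] Mop_def)
    then show ?thesis unfolding E_def by simp
  qed
  show ?thesis
  proof (intro set_eqI iffI)
    fix x :: "'k op" assume "x \<in> std1"
    then obtain n T where x: "x = restr (monop T \<circ> vraw n)" and a: "allowed T n"
      unfolding std1_def allowed_def by blast
    show "x \<in> Std" unfolding x h[OF a] by (rule E_in_Std[OF a])
  next
    fix x :: "'k op" assume "x \<in> Std"
    then obtain n T where x: "x = E T n" and a: "allowed T n"
      unfolding Std_def by blast
    have "restr (monop T \<circ> vraw n) \<in> (std1 :: 'k op set)"
      using a unfolding std1_def allowed_def by blast
    then show "x \<in> std1" unfolding x h[OF a, symmetric] .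
  qed
qed

lemma sqpiv_eq:
  assumes two: "(1::'k::field) + 1 = 0"
  shows "(sqpiv :: 'k op set) = {E {n - 2} n | n. 3 \<le> n}"
proof -
  have e: "(xop i \<circ> vraw n :: 'k op) = Mop {i} n" for i n
    by (rule ext) (simp add: xop_c2[OF two] Mop_def)
  show ?thesis unfolding sqpiv_def E_def e ..
qed

lemma pivot_eq: "(pivot i :: 'k::field op) = E {} i"
proof -
  have "Mop {} i = (vraw i :: 'k op)" by (rule ext) (simp add: Mop_def)
  then show ?thesis unfolding pivot_def E_def by simp
qed

lemma allowed_K:
  assumes A: "allowed A a" and B: "allowed B b" and ab: "a \<le> b" and j: "a + 3*k \<in> B"
  shows "allowed (A \<union> (B - {a + 3*k} \<union> Pset a k)) b"
proof -
  have jb: "a + 3*k + 3 \<le> b" using allowed_bound[OF B j] .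
  have bound: "i + 3 \<le> b" if "i \<in> A \<union> (B - {a + 3*k} \<union> Pset a k)" for i
    using that allowed_bound[OF A, of i] allowed_bound[OF B, of i] Pset_ub[of i a k] ab jb by auto
  have n4: "\<not> (b = 4 \<and> 0 \<in> A \<union> (B - {a + 3*k} \<union> Pset a k))"
  proof
    assume h: "b = 4 \<and> 0 \<in> A \<union> (B - {a + 3*k} \<union> Pset a k)"
    then have j1: "a + 3*k \<le> 1" using jb by simp
    have "0 \<notin> B" using B h unfolding allowed_def by auto
    moreover have "0 \<notin> A" using allowed_bound[OF A, of 0] j1 by auto
    moreover have "0 \<notin> Pset a k" using Pset_ub[of 0 a k] j1 by auto
    ultimately show False using h by auto
  qed
  have n7: "\<not> (b = 7 \<and> 0 \<in> A \<union> (B - {a + 3*k} \<union> Pset a k) \<and> 3 \<in> A \<union> (B - {a + 3*k} \<union> Pset a k))"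
  proof
    assume h: "b = 7 \<and> 0 \<in> A \<union> (B - {a + 3*k} \<union> Pset a k) \<and> 3 \<in> A \<union> (B - {a + 3*k} \<union> Pset a k)"
    then have j4: "a + 3*k \<le> 4" using jb by simp
    have "3 \<notin> A" using allowed_bound[OF A, of 3] j4 by auto
    moreover have "3 \<notin> Pset a k" using Pset_ub[of 3 a k] j4 by auto
    ultimately have b3: "3 \<in> B" "a + 3*k \<noteq> 3" using h by auto
    have "0 \<notin> B" using B h b3 unfolding allowed_def by auto
    moreover have "0 \<notin> Pset a k"
    proof
      assume "0 \<in> Pset a k"
      then have "a = 0" "k \<ge> 1" using Pset_lb[of 0 a k] Pset_ub[of 0 a k] by auto
      then show False using j4 b3(2) by auto
    qed
    moreover have "0 \<notin> A"
    proof
      assume a0: "0 \<in> A"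
      then have "3 \<le> a" using allowed_bound[OF A] by fastforce
      then have "a = 4" using j4 b3(2) by arith
      then show False using A a0 unfolding allowed_def by auto
    qed
    ultimately show False using h by auto
  qed
  show ?thesis unfolding allowed_def using bound n4 n7 by blast
qed

lemma allowed_D:
  assumes A: "allowed A a" and B: "allowed B b" and ab: "a \<le> b" and r: "(b - a) mod 3 \<noteq> 0"
  shows "allowed (A \<union> B \<union> Dset a b) (Dm a b)"
proof -
  define k where "k = (b - a) div 3"
  have "(b - a) mod 3 = 1 \<or> (b - a) mod 3 = 2" using r by linarith
  then show ?thesis
  proof
    assume r1: "(b - a) mod 3 = 1"
    have bk: "b = a + 3*k + 1" using mult_div_mod_eq[of 3 "b - a"] r1 ab unfolding k_def by linarith
    have D: "Dset a b = Pset a k \<union> {a + 3*k}" "Dm a b = b + 2"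
      unfolding Dset_def Dm_def using r1 k_def by auto
    have bound: "i + 3 \<le> b + 2" if "i \<in> A \<union> B \<union> (Pset a k \<union> {a + 3*k})" for i
      using that allowed_bound[OF A, of i] allowed_bound[OF B, of i] Pset_ub[of i a k] ab bk by auto
    have n4: "\<not> (b + 2 = 4 \<and> 0 \<in> A \<union> B \<union> (Pset a k \<union> {a + 3*k}))"
    proof
      assume h: "b + 2 = 4 \<and> 0 \<in> A \<union> B \<union> (Pset a k \<union> {a + 3*k})"
      then have "a + 3*k = 1" using bk by simp
      then show False using h allowed_bound[OF A, of 0] allowed_bound[OF B, of 0] Pset_ub[of 0 a k] bk
        by auto
    qed
    have n7: "\<not> (b + 2 = 7 \<and> 0 \<in> A \<union> B \<union> (Pset a k \<union> {a + 3*k}) \<and> 3 \<in> A \<union> B \<union> (Pset a k \<union> {a + 3*k}))"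
    proof
      assume h: "b + 2 = 7 \<and> 0 \<in> A \<union> B \<union> (Pset a k \<union> {a + 3*k}) \<and> 3 \<in> A \<union> B \<union> (Pset a k \<union> {a + 3*k})"
      then have "a + 3*k = 4" using bk by simp
      then show False using h allowed_bound[OF A, of 3] allowed_bound[OF B, of 3] Pset_ub[of 3 a k] bk
        by auto
    qed
    show ?thesis unfolding allowed_def D using bound n4 n7 by blast
  next
    assume r2: "(b - a) mod 3 = 2"
    have bk: "b = a + 3*k + 2" using mult_div_mod_eq[of 3 "b - a"] r2 ab unfolding k_def by linarith
    have D: "Dset a b = Pset a k \<union> {a + 3*k, a + 3*k + 1, a + 3*k + 2}" "Dm a b = b + 3"
      unfolding Dset_def Dm_def using r2 k_def by auto
    have bound: "i + 3 \<le> b + 3" if "i \<in> A \<union> B \<union> (Pset a k \<union> {a + 3*k, a + 3*k + 1, a + 3*k + 2})" for i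
      using that allowed_bound[OF A, of i] allowed_bound[OF B, of i] Pset_ub[of i a k] ab bk by auto
    have n4: "b + 3 \<noteq> 4" using bk by simp
    have n7: "\<not> (b + 3 = 7 \<and> 0 \<in> A \<union> B \<union> (Pset a k \<union> {a + 3*k, a + 3*k + 1, a + 3*k + 2}))"
    proof
      assume h: "b + 3 = 7 \<and> 0 \<in> A \<union> B \<union> (Pset a k \<union> {a + 3*k, a + 3*k + 1, a + 3*k + 2})"
      then have s2: "a + 3*k = 2" using bk by simp
      then have ak: "a = 2" "k = 0" by arith+
      have "0 \<notin> B" using B h unfolding allowed_def by auto
      then show False using h ak allowed_bound[OF A, of 0] by auto
    qed
    show ?thesis unfolding allowed_def D using bound n4 n7 by blast
  qed
qed

lemma Std_linop:
  assumes two: "(1::'k::field) + 1 = 0"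
  shows "b \<in> (Std :: 'k op set) \<Longrightarrow> linop b"
  unfolding Std_def by (auto intro: linop_E[OF two] allowed_finite)

lemma brk_Std_le:
  assumes two: "(1::'k::field) + 1 = 0" and A: "allowed A a" and B: "allowed B b" and ab: "a \<le> b"
  shows "brk (E A a) (E B b :: 'k op) \<in> sclm.span Std"
proof -
  have finA: "finite A" and finB: "finite B" using A B by (simp_all add: allowed_finite)
  have Ab: "\<forall>i\<in>A. i < b" using allowed_bound[OF A] ab by fastforce
  have t1: "(if A \<inter> B = {} \<and> (b - a) mod 3 \<noteq> 0 \<and> (A \<union> B) \<inter> Dset a b = {}
        then E (A \<union> B \<union> Dset a b) (Dm a b) else 0) \<in> sclm.span (Std :: 'k op set)"
    using allowed_D[OF A B ab] by (auto intro: sclm.span_base E_in_Std sclm.span_zero)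
  have t2: "(\<Sum>k\<in>Kset a B. if A \<inter> (B - {a + 3*k} \<union> Pset a k) = {}
          then E (A \<union> (B - {a + 3*k} \<union> Pset a k)) b else 0) \<in> sclm.span (Std :: 'k op set)"
  proof (rule sclm.span_sum)
    fix k assume k: "k \<in> Kset a B"
    then have "a + 3*k \<in> B" unfolding Kset_def by simp
    then show "(if A \<inter> (B - {a + 3*k} \<union> Pset a k) = {}
          then E (A \<union> (B - {a + 3*k} \<union> Pset a k)) b else 0) \<in> sclm.span (Std :: 'k op set)"
      using allowed_K[OF A B ab] by (auto intro: sclm.span_base E_in_Std sclm.span_zero)
  qed
  show ?thesis unfolding bracket_E[OF two finA finB ab Ab] using t1 t2 by (rule sclm.span_add)
qed

lemma brk_Std:
  assumes two: "(1::'k::field) + 1 = 0" and x: "x \<in> (Std :: 'k op set)" and y: "y \<in> Std"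
  shows "brk x y \<in> sclm.span Std"
proof -
  obtain A a where A: "allowed A a" and xE: "x = E A a" using x unfolding Std_def by blast
  obtain B b where B: "allowed B b" and yE: "y = E B b" using y unfolding Std_def by blast
  show ?thesis
  proof (cases "a \<le> b")
    case True then show ?thesis unfolding xE yE by (rule brk_Std_le[OF two A B])
  next
    case False
    then have "brk (E B b) (E A a :: 'k op) \<in> sclm.span Std" by (intro brk_Std_le[OF two B A]) auto
    then have "- brk (E B b) (E A a :: 'k op) \<in> sclm.span Std" by (rule sclm.span_neg)
    then show ?thesis unfolding xE yE by (simp add: brk_antisym[of "E A a"])
  qed
qed

lemma span_Std_brk:
  assumes two: "(1::'k::field) + 1 = 0" and x: "x \<in> sclm.span (Std :: 'k op set)" and y: "y \<in> sclm.span Std"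
  shows "brk x y \<in> sclm.span Std"
  by (rule span_brk[OF Std_linop[OF two] brk_Std[OF two] x y])




lemma allowed_subset: "allowed R n \<Longrightarrow> T \<subseteq> R \<Longrightarrow> allowed T n"
  unfolding allowed_def by auto

lemma Kset_removal:
  assumes j: "j \<in> R" shows "Kset j R = {0}"
proof -
  have "k = 0" if "k \<in> Kset j R" for k
  proof (rule ccontr)
    assume "k \<noteq> 0"
    then have "j \<in> Pset j k" by (simp add: Pset_iff)
    moreover have "j \<noteq> j + 3*k" using \<open>k \<noteq> 0\<close> by simp
    ultimately show False using that j unfolding Kset_def by auto
  qed
  moreover have "0 \<in> Kset j R" using j unfolding Kset_def by simp
  ultimately show ?thesis by auto
qed

lemma Dset_contains:
  assumes "a + 3 \<le> b" "(b - a) mod 3 \<noteq> 0" shows "a \<in> Dset a b"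
proof -
  have "(b - a) div 3 \<ge> 1" using assms(1) by simp
  then have "a \<in> Pset a ((b - a) div 3)" by (simp add: Pset_iff)
  then show ?thesis unfolding Dset_def by auto
qed

lemma brk_removal:
  assumes two: "(1::'k::field) + 1 = 0" and R: "allowed R n" and j: "j \<in> R"
  shows "brk (E {} j) (E R n :: 'k op) = E (R - {j}) n"
proof -
  have finR: "finite R" using R by (rule allowed_finite)
  have jn: "j + 3 \<le> n" using allowed_bound[OF R j] .
  have C: "\<not> ({} \<inter> R = {} \<and> (n - j) mod 3 \<noteq> 0 \<and> ({} \<union> R) \<inter> Dset j n = {})"
    using Dset_contains[OF jn] j by auto
  have S: "{} \<union> (R - {j + 3*0} \<union> Pset j 0) = R - {j}" by simp
  have "brk (E {} j) (E R n :: 'k op) =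
     (if {} \<inter> R = {} \<and> (n - j) mod 3 \<noteq> 0 \<and> ({} \<union> R) \<inter> Dset j n = {}
        then E ({} \<union> R \<union> Dset j n) (Dm j n) else 0)
     + (\<Sum>k\<in>Kset j R. if {} \<inter> (R - {j + 3*k} \<union> Pset j k) = {}
          then E ({} \<union> (R - {j + 3*k} \<union> Pset j k)) n else 0)"
    by (rule bracket_E[OF two finite.emptyI finR]) (use jn in auto)
  also have "\<dots> = 0 + E ({} \<union> (R - {j + 3*0} \<union> Pset j 0)) n"
    by (simp only: if_not_P[OF C] Kset_removal[OF j]) simp
  also have "\<dots> = E (R - {j}) n" by (simp only: S add_0_left)
  finally show ?thesis .
qed

lemma brk_gen:
  assumes two: "(1::'k::field) + 1 = 0" and finB: "finite B" and ab: "a < b"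
    and nk: "\<And>k. a + 3*k \<notin> B" and r: "(b - a) mod 3 \<noteq> 0" and d: "B \<inter> Dset a b = {}"
  shows "brk (E {} a) (E B b :: 'k op) = E (B \<union> Dset a b) (Dm a b)"
proof -
  have K: "Kset a B = {}" unfolding Kset_def using nk by auto
  show ?thesis using bracket_E[OF two finite.emptyI finB, of a b] ab r d K by simp
qed

definition cand :: "'k::field op set \<Rightarrow> bool" where
  "cand L \<longleftrightarrow> sclm.subspace L \<and> (\<forall>A\<in>L. \<forall>B\<in>L. brk A B \<in> L)
     \<and> E {} 0 \<in> L \<and> E {} 1 \<in> L \<and> E {} 2 \<in> L"

lemma removal_closed:
  assumes two: "(1::'k::field) + 1 = 0" and L: "cand (L :: 'k op set)"
    and v: "\<And>j. j < n \<Longrightarrow> E {} j \<in> L"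
    and R: "allowed R n" and ER: "E R n \<in> L" and T: "T \<subseteq> R"
  shows "E T n \<in> L"
proof -
  have finD: "finite (R - T)" using allowed_finite[OF R] by simp
  have "\<forall>R'. allowed R' n \<longrightarrow> E R' n \<in> L \<longrightarrow> D \<subseteq> R' \<longrightarrow> E (R' - D) n \<in> L" if "finite D" for D
    using that
  proof (induction D rule: finite_induct)
    case empty then show ?case by simp
  next
    case (insert x D)
    show ?case
    proof (intro allI impI)
      fix R' assume R': "allowed R' n" "E R' n \<in> L" "insert x D \<subseteq> R'"
      have h: "E (R' - D) n \<in> L" using insert.IH R' by auto
      have aD: "allowed (R' - D) n" using allowed_subset[OF R'(1)] by auto
      have x: "x \<in> R' - D" using R'(3) insert.hyps(2) by auto
      have xn: "x < n" using allowed_bound[OF aD x] by simp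
      have "brk (E {} x) (E (R' - D) n) \<in> L" using L v[OF xn] h unfolding cand_def by blast
      moreover have "brk (E {} x) (E (R' - D) n :: 'k op) = E (R' - D - {x}) n"
        by (rule brk_removal[OF two aD x])
      moreover have "R' - D - {x} = R' - insert x D" by auto
      ultimately show "E (R' - insert x D) n \<in> L" by simp
    qed
  qed
  from this[OF finD] have "E (R - (R - T)) n \<in> L" using R ER by auto
  moreover have "R - (R - T) = T" using T by auto
  ultimately show ?thesis by simp
qed

definition Fs :: "nat \<Rightarrow> nat set" where "Fs n = {i. i + 3 \<le> n}"

lemma Fs_finite[simp]: "finite (Fs n)"
  unfolding Fs_def by (rule finite_subset[of _ "{..<n}"]) auto

lemma allowed_Fs: "n \<noteq> 4 \<Longrightarrow> n \<noteq> 7 \<Longrightarrow> allowed (Fs n) n"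
  unfolding allowed_def Fs_def by auto

lemma allowed_max:
  assumes "allowed T n"
  shows "(n \<noteq> 4 \<and> n \<noteq> 7 \<and> T \<subseteq> Fs n) \<or> (n = 4 \<and> T \<subseteq> {1}) \<or> (n = 7 \<and> (T \<subseteq> {1,2,3,4} \<or> T \<subseteq> {0,1,2,4}))"
proof -
  have b: "\<And>i. i \<in> T \<Longrightarrow> i + 3 \<le> n" using assms by (simp add: allowed_bound)
  consider "n = 4" | "n = 7" | "n \<noteq> 4 \<and> n \<noteq> 7" by blast
  then show ?thesis
  proof cases
    case 1
    have "T \<subseteq> {1}"
    proof
      fix i assume i: "i \<in> T"
      have "i \<le> 1" using b[OF i] 1 by simp
      moreover have "i \<noteq> 0"
      proof
        assume "i = 0"
        with i have "0 \<in> T" by simp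
        with assms 1 show False unfolding allowed_def by simp
      qed
      ultimately have "i \<le> 1" "i \<noteq> 0" by auto
      then show "i \<in> {1}" by auto
    qed
    then show ?thesis using 1 by simp
  next
    case 2
    have "T \<subseteq> {0,1,2,3,4}" using b 2 by fastforce
    moreover have "\<not> (0 \<in> T \<and> 3 \<in> T)" using assms 2 unfolding allowed_def by auto
    ultimately have "T \<subseteq> {1,2,3,4} \<or> T \<subseteq> {0,1,2,4}" by auto
    then show ?thesis using 2 by simp
  next
    case 3
    then show ?thesis using b unfolding Fs_def by auto
  qed
qed

lemma generation:
  assumes two: "(1::'k::field) + 1 = 0" and L: "cand (L :: 'k op set)"
  shows "allowed T n \<Longrightarrow> E T n \<in> L"
proof (induction n arbitrary: T rule: less_induct)
  case (less n)
  have v: "E {} j \<in> L" if "j < n" for j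
    using less.IH[OF that, of "{}"] by (simp add: allowed_def)
  have Lb: "brk x y \<in> L" if "x \<in> L" "y \<in> L" for x y using L that unfolding cand_def by blast
  have fin: "finite {i::nat. i + 3 \<le> m}" for m by (rule finite_subset[of _ "{..<m}"]) auto
  have maxF: "E (Fs n) n \<in> L" if "n \<noteq> 4" "n \<noteq> 7"
  proof -
    have "n \<le> 2 \<or> n = 3 \<or> n = 5 \<or> n = 10 \<or> (n = 6 \<or> n = 8 \<or> n = 9 \<or> n \<ge> 11)" using that by linarith
    then consider "n \<le> 2" | "n = 3" | "n = 5" | "n = 10" | "n = 6 \<or> n = 8 \<or> n = 9 \<or> n \<ge> 11" by blast
    then show ?thesis
    proof cases
      case 1
      then have "Fs n = {}" unfolding Fs_def by auto
      moreover have "E {} n \<in> L" using 1 L unfolding cand_def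
        by (metis le_Suc_eq le_zero_eq numeral_2_eq_2 One_nat_def)
      ultimately show ?thesis by simp
    next
      case 2
      have "brk (E {} 0) (E {} 1 :: 'k op) = E ({} \<union> Dset 0 1) (Dm 0 1)"
        by (rule brk_gen[OF two]) (auto simp: Dset_def)
      moreover have "{} \<union> Dset 0 1 = Fs n" "Dm 0 1 = n" using 2 by (auto simp: Dset_def Dm_def Fs_def)
      ultimately show ?thesis using Lb[OF v[of 0] v[of 1]] 2 by simp
    next
      case 3
      have "brk (E {} 0) (E {} 2 :: 'k op) = E ({} \<union> Dset 0 2) (Dm 0 2)"
        by (rule brk_gen[OF two]) (auto simp: Dset_def)
      moreover have "{} \<union> Dset 0 2 = Fs n" "Dm 0 2 = n" using 3 by (auto simp: Dset_def Dm_def Fs_def)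
      ultimately show ?thesis using Lb[OF v[of 0] v[of 2]] 3 by simp
    next
      case 4
      have B: "allowed {0,1,4} 7" unfolding allowed_def by auto
      have e7: "E {0,1,4} 7 \<in> L" using less.IH[of 7] B 4 by simp
      have D: "Dset 2 7 = {2,3,5,6,7}" unfolding Dset_def by (auto simp: Pset_iff)
      have "brk (E {} 2) (E {0,1,4} 7 :: 'k op) = E ({0,1,4} \<union> Dset 2 7) (Dm 2 7)"
        apply (rule brk_gen[OF two])
        apply (auto simp: D)
        by presburger
      moreover have "{0,1,4} \<union> Dset 2 7 = Fs n" "Dm 2 7 = n" using 4 unfolding D
        by (auto simp: Dm_def Fs_def)
      ultimately show ?thesis using Lb[OF v[of 2] e7] 4 by simp
    next
      case 5
      define a where "a = n - 5"
      define B where "B = Fs (n - 3)"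
      have B: "allowed B (n - 3)" unfolding B_def using 5 by (intro allowed_Fs) auto
      have eB: "E B (n - 3) \<in> L" using less.IH[of "n - 3"] B 5 by auto
      have D: "Dset a (n - 3) = {a, a+1, a+2}" "Dm a (n - 3) = n" using 5 unfolding a_def Dset_def Dm_def
        by auto
      have "brk (E {} a) (E B (n - 3) :: 'k op) = E (B \<union> Dset a (n - 3)) (Dm a (n - 3))"
      proof (rule brk_gen[OF two])
        show "finite B" unfolding B_def by simp
        show "a < n - 3" using 5 unfolding a_def by auto
        show "a + 3*k \<notin> B" for k using 5 unfolding a_def B_def Fs_def by auto
        show "(n - 3 - a) mod 3 \<noteq> 0" using 5 unfolding a_def by auto
        show "B \<inter> Dset a (n - 3) = {}" using 5 by (simp only: D(1)) (auto simp: B_def Fs_def a_def)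
      qed
      moreover have "B \<union> Dset a (n - 3) = Fs n" using 5 by (simp only: D(1)) (auto simp: B_def Fs_def a_def)
      moreover have "a < n" unfolding a_def using 5 by auto
      ultimately show ?thesis using Lb[OF v[of a] eB] D by simp
    qed
  qed
  have max4: "E {1} 4 \<in> L" if "n = 4"
  proof -
    have "brk (E {} 1) (E {} 2 :: 'k op) = E ({} \<union> Dset 1 2) (Dm 1 2)"
      by (rule brk_gen[OF two]) (auto simp: Dset_def)
    moreover have "{} \<union> Dset 1 2 = {1}" "Dm 1 2 = 4" by (auto simp: Dset_def Dm_def)
    ultimately show ?thesis using Lb[OF v[of 1] v[of 2]] that by simp
  qed
  have max7a: "E {1,2,3,4} 7 \<in> L" if "n = 7"
  proof -
    have e: "E {1} 4 \<in> L" using less.IH[of 4 "{1}"] that by (simp add: allowed_def)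
    have D: "Dset 2 4 = {2,3,4}" unfolding Dset_def by auto
    have "brk (E {} 2) (E {1} 4 :: 'k op) = E ({1} \<union> Dset 2 4) (Dm 2 4)"
      by (rule brk_gen[OF two]) (auto simp: D)
    moreover have "{1} \<union> Dset 2 4 = {1,2,3,4}" "Dm 2 4 = 7" unfolding D by (auto simp: Dm_def)
    ultimately show ?thesis using Lb[OF v[of 2] e] that by simp
  qed
  have max7b: "E {0,1,2,4} 7 \<in> L" if "n = 7"
  proof -
    have e: "E {0} 5 \<in> L" using less.IH[of 5 "{0}"] that by (simp add: allowed_def)
    have D: "Dset 1 5 = {1,2,4}" unfolding Dset_def by (auto simp: Pset_iff)
    have D': "Dset (Suc 0) 5 = {1,2,4}" using D by simp
    have "brk (E {} 1) (E {0} 5 :: 'k op) = E ({0} \<union> Dset 1 5) (Dm 1 5)"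
      by (rule brk_gen[OF two]) (auto simp: D D')
    moreover have "{0} \<union> Dset 1 5 = {0,1,2,4}" "Dm 1 5 = 7" unfolding D by (auto simp: Dm_def)
    ultimately show ?thesis using Lb[OF v[of 1] e] that by simp
  qed
  show ?case
    using allowed_max[OF less.prems]
  proof (elim disjE conjE)
    assume "n \<noteq> 4" "n \<noteq> 7" "T \<subseteq> Fs n"
    then show ?thesis using removal_closed[OF two L v allowed_Fs maxF] by auto
  next
    assume n: "n = 4" and T: "T \<subseteq> {1}"
    have "allowed {1} n" using n by (simp add: allowed_def)
    then show ?thesis using removal_closed[OF two L v _ max4[OF n] T] n by auto
  next
    assume n: "n = 7" and T: "T \<subseteq> {1,2,3,4}"
    have "allowed {1,2,3,4} n" using n by (simp add: allowed_def)
    then show ?thesis using removal_closed[OF two L v _ max7a[OF n] T] n by auto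
  next
    assume n: "n = 7" and T: "T \<subseteq> {0,1,2,4}"
    have "allowed {0,1,2,4} n" using n by (simp add: allowed_def)
    then show ?thesis using removal_closed[OF two L v _ max7b[OF n] T] n by auto
  qed
qed




lemma comp_E:
  assumes two: "(1::'k::field) + 1 = 0" and finA: "finite A" and finB: "finite B"
  shows "E A a \<circ> E B b = (restr (\<lambda>f. Mop A a (Mop B b f)) :: 'k op)"
proof (rule ext)
  fix f :: "'k grass"
  show "(E A a \<circ> E B b) f = restr (\<lambda>f. Mop A a (Mop B b f)) f"
  proof (cases "f \<in> Lam")
    case True
    then show ?thesis using Mop_Lam[OF two finB True] by (simp add: E_apply[OF two] restr_def)
  next
    case False
    then show ?thesis by (simp add: E_notLam E_zero[OF two] restr_def)
  qed
qed

lemma sq_E0: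
  assumes two: "(1::'k::field) + 1 = 0"
  shows "sq (E {} m :: 'k op) = E {m+1} (m+3)"
proof -
  have "sq (E {} m :: 'k op) = restr (\<lambda>f. Mop {} m (Mop {} m f))"
    unfolding sq_def by (rule comp_E[OF two]) auto
  also have "\<dots> = restr (Mop {m+1} (m+3))"
  proof (rule restr_eq_fin)
    fix f :: "'k grass" and U :: "nat set" assume "f \<in> Lam" "finite U"
    then show "Mop {} m (Mop {} m f) U = Mop {m + 1} (m + 3) f U"
      unfolding Mop_def by (simp add: vraw_sq[OF two])
  next
    fix f :: "'k grass" assume f: "f \<in> Lam"
    show "infz (Mop {} m (Mop {} m f))"
      by (intro Mop_infz[OF two] Lam_infz Mop_Lam[OF two] f) auto
    show "infz (Mop {m + 1} (m + 3) f)"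
      by (intro Mop_infz[OF two] Lam_infz f) auto
  qed
  finally show ?thesis unfolding E_def .
qed

lemma sq_E_ne:
  assumes two: "(1::'k::field) + 1 = 0" and finA: "finite A" and ne: "A \<noteq> {}" and Aa: "\<forall>i\<in>A. i < a"
  shows "sq (E A a :: 'k op) = 0"
proof -
  have KA: "Kset a A = {}" unfolding Kset_def using Aa by auto
  have "sq (E A a :: 'k op) = restr (\<lambda>f. Mop A a (Mop A a f))"
    unfolding sq_def by (rule comp_E[OF two finA finA])
  also have "\<dots> = restr (\<lambda>f. 0)"
  proof (rule restr_eq_fin)
    fix f :: "'k grass" and U :: "nat set" assume f: "f \<in> Lam" and U: "finite U"
    have "Mop A a (Mop A a f) U = mulm A (vraw a (mulm A (vraw a f))) U"
      unfolding Mop_def ..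
    also have "\<dots> = mulm A (mulm A (vraw a (vraw a f)) + (\<Sum>k\<in>Kset a A. mulm (A - {a + 3*k} \<union> Pset a k) (vraw a f))) U"
      by (rule mulm_cong[OF leib_feq[OF two finA] U])
    also have "\<dots> = 0" using ne KA by (simp add: mulm_mulm)
    finally show "Mop A a (Mop A a f) U = (\<lambda>f. 0) f U" by simp
  next
    fix f :: "'k grass" assume f: "f \<in> Lam"
    show "infz (Mop A a (Mop A a f))"
      by (intro Mop_infz[OF two finA] Lam_infz Mop_Lam[OF two finA] f)
    show "infz ((\<lambda>f. 0::'k grass) f)" by simp
  qed
  also have "restr (\<lambda>f. 0) = (0 :: 'k op)" by (rule ext) (simp add: restr_def)
  finally show ?thesis .
qed

lemma grass_double: "(1::'k::field) + 1 = 0 \<Longrightarrow> (g::'k grass) + g = 0"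
  by (rule ext) (simp add: c2_double)

lemma brk_sq:
  assumes two: "(1::'k::field) + 1 = 0" and x: "linop x" and v: "linop v"
  shows "brk x (sq v) = brk (brk x v) (v :: 'k op)"
proof (rule ext)
  fix f :: "'k grass"
  show "brk x (sq v) f = brk (brk x v) v f"
  proof (cases "f \<in> Lam")
    case True
    have l: "v f \<in> Lam" "x f \<in> Lam" "x (v f) \<in> Lam" "v (x f) \<in> Lam" "v (v f) \<in> Lam"
      using linopD(2)[OF x] linopD(2)[OF v] True by auto
    have "v (x (v f) - v (x f)) = v (x (v f)) - v (v (x f))"
      by (rule linop_diff[OF v l(3) l(4)])
    then have "brk (brk x v) v f = x (v (v f)) + v (x (v f)) + (v (x (v f)) + v (v (x f)))"
      unfolding brk_def by (simp add: grass_minus_c2[OF two])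
    also have "\<dots> = x (v (v f)) + v (v (x f)) + (v (x (v f)) + v (x (v f)))"
      by (simp add: add_ac)
    also have "\<dots> = x (v (v f)) + v (v (x f))"
      by (simp add: grass_double[OF two])
    also have "\<dots> = brk x (sq v) f"
      unfolding brk_def sq_def by (simp add: grass_minus_c2[OF two])
    finally show ?thesis by simp
  next
    case False
    have z: "x 0 = 0" "v 0 = 0" using linop_zero_arg x v by auto
    show ?thesis unfolding brk_def sq_def
      using False linopD(1)[OF x False] linopD(1)[OF v False] z by simp
  qed
qed

lemma sq_add:
  assumes two: "(1::'k::field) + 1 = 0" and P: "linop P" and Q: "linop Q"
  shows "sq (P + Q) = sq P + sq Q + brk P (Q :: 'k op)"
proof (rule ext)
  fix f :: "'k grass"
  show "sq (P + Q) f = (sq P + sq Q + brk P Q) f"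
  proof (cases "f \<in> Lam")
    case True
    have l: "P f \<in> Lam" "Q f \<in> Lam" using linopD(2)[OF P] linopD(2)[OF Q] True by auto
    have "sq (P + Q) f = P (P f + Q f) + Q (P f + Q f)" unfolding sq_def by simp
    also have "\<dots> = P (P f) + P (Q f) + (Q (P f) + Q (Q f))"
      using linopD(3)[OF P l] linopD(3)[OF Q l] by simp
    also have "\<dots> = (sq P + sq Q + brk P Q) f"
      unfolding sq_def brk_def by (simp add: grass_minus_c2[OF two] add_ac)
    finally show ?thesis .
  next
    case False
    have z: "P 0 = 0" "Q 0 = 0" using linop_zero_arg P Q by auto
    show ?thesis unfolding brk_def sq_def
      using False linopD(1)[OF P False] linopD(1)[OF Q False] z by simp
  qed
qed

lemma sq_scl:
  assumes b: "linop b"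
  shows "sq (scl c b) = scl (c * c) (sq (b :: 'k::field op))"
proof (rule ext)
  fix f :: "'k grass"
  show "sq (scl c b) f = scl (c * c) (sq b) f"
  proof (cases "f \<in> Lam")
    case True
    have "b (\<lambda>S. c * b f S) = (\<lambda>S. c * b (b f) S)"
      using linopD(4)[OF b linopD(2)[OF b True]] .
    then show ?thesis unfolding sq_def scl_def by (simp add: fun_eq_iff mult.assoc)
  next
    case False
    have z0: "(\<lambda>S. 0::'k) = 0" by (rule ext) simp
    have b0: "b 0 = 0" using linop_zero_arg b by auto
    have bf: "b f = 0" using linopD(1)[OF b False] .
    have "sq (scl c b) f = (\<lambda>S. c * b (\<lambda>S. c * b f S) S)" unfolding sq_def scl_def by simp
    also have "\<dots> = 0" unfolding bf by (simp add: z0 b0)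
    also have "0 = scl (c * c) (sq b) f" unfolding sq_def scl_def by (simp add: bf b0 z0)
    finally show ?thesis .
  qed
qed

lemma span_sq:
  assumes two: "(1::'k::field) + 1 = 0"
    and lB: "\<And>b. b \<in> B \<Longrightarrow> linop b"
    and bc: "\<And>x y. x \<in> sclm.span B \<Longrightarrow> y \<in> sclm.span B \<Longrightarrow> brk x y \<in> sclm.span B"
    and sB: "\<And>b. b \<in> B \<Longrightarrow> sq b \<in> sclm.span B"
    and x: "x \<in> sclm.span B"
  shows "sq x \<in> sclm.span (B :: 'k op set)"
proof -
  from x have "x \<in> sclm.span B \<and> linop x \<and> sq x \<in> sclm.span B"
  proof (induction rule: sclm.span_induct_alt)
    case base
    have z: "sq (0::'k op) = 0" unfolding sq_def by (rule ext) simp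
    show ?case
    proof (intro conjI)
      show "0 \<in> sclm.span B" by (rule sclm.span_zero)
      show "linop (0::'k op)" by (rule linop_0)
      show "sq (0::'k op) \<in> sclm.span B" unfolding z by (rule sclm.span_zero)
    qed
  next
    case (step c b y)
    have lb: "linop b" using lB step(1) .
    have ly: "linop y" and yS: "y \<in> sclm.span B" and sy: "sq y \<in> sclm.span B" using step(2) by auto
    have cb: "scl c b \<in> sclm.span B" using step(1) by (intro sclm.span_scale sclm.span_base)
    have e: "sq (scl c b + y) = scl (c * c) (sq b) + sq y + brk (scl c b) y"
      by (simp only: sq_add[OF two linop_scl[OF lb] ly] sq_scl[OF lb])
    have m: "scl (c * c) (sq b) + sq y + brk (scl c b) y \<in> sclm.span B"
      by (intro sclm.span_add sclm.span_scale sB step(1) sy bc cb yS)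
    show ?case
    proof (intro conjI)
      show "scl c b + y \<in> sclm.span B" by (rule sclm.span_add[OF cb yS])
      show "linop (scl c b + y)" by (rule linop_add[OF linop_scl[OF lb] ly])
      show "sq (scl c b + y) \<in> sclm.span B" unfolding e by (rule m)
    qed
  qed
  then show ?thesis by blast
qed

definition SQ :: "'k::field op set" where
  "SQ = {E {n - 2} n | n. 3 \<le> n}"

lemma SQ_sq:
  assumes two: "(1::'k::field) + 1 = 0" and y: "y \<in> (SQ :: 'k op set)"
  obtains v where "v \<in> Std" "y = sq v" "v = E {} (THE m. True)" | m where "y = sq (E {} m)"
proof -
  obtain n where n: "3 \<le> n" "y = E {n - 2} n" using y unfolding SQ_def by blast
  have "sq (E {} (n - 3) :: 'k op) = E {n - 3 + 1} (n - 3 + 3)" by (rule sq_E0[OF two])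
  moreover have "n - 3 + 1 = n - 2" "n - 3 + 3 = n" using n by auto
  ultimately have "y = sq (E {} (n - 3))" using n by simp
  then show ?thesis by (rule that(2))
qed

lemma E0_Std: "E {} m \<in> Std"
  by (rule E_in_Std) (simp add: allowed_def)

lemma SQ_linop: "(1::'k::field) + 1 = 0 \<Longrightarrow> y \<in> (SQ :: 'k op set) \<Longrightarrow> linop y"
  unfolding SQ_def by (auto intro: linop_E)

lemma B2_linop: "(1::'k::field) + 1 = 0 \<Longrightarrow> y \<in> (Std \<union> SQ :: 'k op set) \<Longrightarrow> linop y"
  using SQ_linop Std_linop by blast

lemma brk_B2:
  assumes two: "(1::'k::field) + 1 = 0" and x: "x \<in> (Std \<union> SQ :: 'k op set)" and y: "y \<in> Std \<union> SQ"
  shows "brk x y \<in> sclm.span Std"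
proof -
  have lS: "\<And>b. b \<in> (Std :: 'k op set) \<Longrightarrow> linop b" by (rule Std_linop[OF two])
  have P1: "brk z (sq (E {} m)) \<in> sclm.span Std" if z: "z \<in> sclm.span (Std :: 'k op set)" for z m
  proof -
    have lz: "linop z" by (rule linop_span[OF lS z])
    have lv: "linop (E {} m :: 'k op)" by (rule linop_E[OF two]) simp
    have vS: "E {} m \<in> sclm.span (Std :: 'k op set)" by (rule sclm.span_base[OF E0_Std])
    show ?thesis unfolding brk_sq[OF two lz lv]
      by (intro span_Std_brk[OF two] z vS)
  qed
  have P2: "brk (sq (E {} m)) z \<in> sclm.span Std" if z: "z \<in> sclm.span (Std :: 'k op set)" for z m
  proof -
    have "- brk z (sq (E {} m)) \<in> sclm.span Std" by (rule sclm.span_neg[OF P1[OF z]])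
    then show ?thesis by (simp add: brk_antisym[of "sq (E {} m)" z])
  qed
  show ?thesis
  proof (cases "x \<in> Std")
    case xS: True
    show ?thesis
    proof (cases "y \<in> Std")
      case True then show ?thesis using xS by (intro span_Std_brk[OF two] sclm.span_base)
    next
      case False
      then have "y \<in> SQ" using y by auto
      then obtain m where "y = sq (E {} m)" using SQ_sq[OF two] by metis
      then show ?thesis using P1[OF sclm.span_base[OF xS]] by simp
    qed
  next
    case False
    then have "x \<in> SQ" using x by auto
    then obtain mx where mx: "x = sq (E {} mx)" using SQ_sq[OF two] by metis
    show ?thesis
    proof (cases "y \<in> Std")
      case True then show ?thesis using P2[OF sclm.span_base[OF True]] mx by simp
    next
      case False
      then have "y \<in> SQ" using y by auto
      then obtain my where my: "y = sq (E {} my)" using SQ_sq[OF two] by metis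
      have lx: "linop x" unfolding mx by (intro linop_sq linop_E[OF two]) simp
      have lv: "linop (E {} my :: 'k op)" by (rule linop_E[OF two]) simp
      have "brk x (E {} my) \<in> sclm.span Std"
        unfolding mx by (rule P2[OF sclm.span_base[OF E0_Std]])
      then have "brk (brk x (E {} my)) (E {} my) \<in> sclm.span Std"
        using span_Std_brk[OF two _ sclm.span_base[OF E0_Std]] by blast
      then show ?thesis unfolding my brk_sq[OF two lx lv] .
    qed
  qed
qed

lemma span_B2_brk:
  assumes two: "(1::'k::field) + 1 = 0"
    and x: "x \<in> sclm.span (Std \<union> SQ :: 'k op set)" and y: "y \<in> sclm.span (Std \<union> SQ)"
  shows "brk x y \<in> sclm.span (Std \<union> SQ)"
proof (rule span_brk[OF B2_linop[OF two] _ x y])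
  fix b b' :: "'k op" assume "b \<in> (Std \<union> SQ :: 'k op set)" "b' \<in> Std \<union> SQ"
  then have "brk b b' \<in> sclm.span Std" by (rule brk_B2[OF two])
  then show "brk b b' \<in> sclm.span (Std \<union> SQ)" using sclm.span_mono[of Std "Std \<union> SQ"] by auto
qed

lemma sq_B2:
  assumes two: "(1::'k::field) + 1 = 0" and b: "b \<in> (Std \<union> SQ :: 'k op set)"
  shows "sq b \<in> sclm.span (Std \<union> SQ)"
proof (cases "b \<in> Std")
  case True
  then obtain T n where a: "allowed T n" and bE: "b = E T n" unfolding Std_def by blast
  show ?thesis
  proof (cases "T = {}")
    case True
    have "sq b = E {n+1} (n+3)" unfolding bE True by (rule sq_E0[OF two])
    moreover have "E {n+1} (n+3) \<in> (SQ :: 'k op set)" unfolding SQ_def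
      by (rule CollectI, rule exI[of _ "n+3"]) simp
    ultimately show ?thesis by (auto intro: sclm.span_base)
  next
    case False
    have "sq b = 0" unfolding bE
      by (rule sq_E_ne[OF two allowed_finite[OF a] False]) (use allowed_bound[OF a] in fastforce)
    then show ?thesis by (simp add: sclm.span_zero)
  qed
next
  case False
  then have "b \<in> SQ" using b by auto
  then obtain n where n: "3 \<le> n" "b = E {n - 2} n" unfolding SQ_def by blast
  have "sq b = 0" unfolding n(2) by (rule sq_E_ne[OF two]) (use n in auto)
  then show ?thesis by (simp add: sclm.span_zero)
qed




lemma Pset_card_eq: "card (Pset n k) = 2 * k"
proof (induction k)
  case 0 then show ?case by simp
next
  case (Suc k)
  have "n + 3*k \<notin> Pset n k" "n + 3*k + 1 \<notin> Pset n k"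
    using Pset_ub[of "n + 3*k" n k] Pset_ub[of "n + 3*k + 1" n k] by auto
  then show ?case using Suc by (simp add: Pset_Suc)
qed

lemma odd_E0:
  assumes two: "(1::'k::field) + 1 = 0"
  shows "odd_op (E {} n :: 'k op)"
  unfolding odd_op_def
proof (intro allI impI)
  fix b and f :: "'k grass" assume h: "homog b f"
  then have f: "f \<in> Lam" and par: "\<And>S. f S \<noteq> 0 \<Longrightarrow> odd (card S) = b" unfolding homog_def by auto
  have Ef: "E {} n f = vraw n f" using E_apply[OF two f] by (simp add: Mop_def)
  have L: "vraw n f \<in> Lam" by (rule vraw_Lam[OF two f])
  have "odd (card U) = (\<not> b)" if U: "vraw n f U \<noteq> 0" for U
  proof -
    have finU: "finite U" using U vraw_infz[OF two Lam_infz[OF f]] unfolding infz_def by auto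
    have "(\<Sum>k\<le>card U. tm n k f U) \<noteq> 0" using U vraw_fin'[OF two finU] by simp
    then obtain k where k: "tm n k f U \<noteq> 0" using sum.not_neutral_contains_not_neutral by blast
    define j where "j = n + 3*k"
    have P: "Pset n k \<subseteq> U" "j \<notin> U" and fW: "f (insert j (U - Pset n k)) \<noteq> 0"
      using k unfolding tm_def j_def by (auto split: if_splits)
    have cW: "card (insert j (U - Pset n k)) = card (U - Pset n k) + 1"
      using finU P by simp
    have cU: "card U = card (U - Pset n k) + 2 * k"
      using card_Diff_subset[OF Pset_finite P(1)] card_mono[OF finU P(1)] Pset_card_eq[of n k] by simp
    have "odd (card (U - Pset n k) + 1) = b" using par[OF fW] cW by simp
    then show ?thesis using cU by simp
  qed
  then show "homog (\<not> b) (E {} n f)" unfolding homog_def Ef using L by auto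
qed

definition e1 :: "nat \<Rightarrow> 'k::field grass" where
  "e1 n = (\<lambda>U. if U = {n} then 1 else 0)"

lemma e1_Lam: "(e1 n :: 'k::field grass) \<in> Lam"
proof -
  have "{S. e1 n S \<noteq> (0::'k)} = {{n}}" by (auto simp: e1_def)
  then show ?thesis unfolding Lam_def by (auto simp: e1_def)
qed

lemma tm_e1: "tm n' k (e1 n :: 'k::field grass) W = (if n = n' + 3*k \<and> W = Pset n' k then 1 else 0)"
proof -
  define j where "j = n' + 3*k"
  define P where "P = Pset n' k"
  have jP: "j \<notin> P" unfolding j_def P_def by simp
  have "(P \<subseteq> W \<and> j \<notin> W \<and> insert j (W - P) = {n}) = (n = j \<and> W = P)"
  proof
    assume a: "P \<subseteq> W \<and> j \<notin> W \<and> insert j (W - P) = {n}"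
    then have "j = n" by blast
    moreover have "W - P = {}" using a by blast
    ultimately show "n = j \<and> W = P" using a by blast
  next
    assume "n = j \<and> W = P" then show "P \<subseteq> W \<and> j \<notin> W \<and> insert j (W - P) = {n}" using jP by auto
  qed
  then show ?thesis unfolding tm_def e1_def j_def[symmetric] P_def[symmetric]
    by (auto split: if_splits)
qed

lemma vraw_e1:
  assumes two: "(1::'k::field) + 1 = 0"
  shows "vraw n' (e1 n :: 'k grass) W = (if \<exists>k. n = n' + 3*k \<and> W = Pset n' k then 1 else 0)"
proof (cases "\<exists>k. n = n' + 3*k \<and> W = Pset n' k")
  case True
  then obtain k0 where k0: "n = n' + 3*k0" "W = Pset n' k0" by blast
  have "{k. tm n' k (e1 n :: 'k grass) W \<noteq> 0} \<subseteq> {k0}" using k0 by (auto simp: tm_e1)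
  then have "vraw n' (e1 n :: 'k grass) W = (\<Sum>k\<in>{k0}. tm n' k (e1 n) W)"
    unfolding vraw_Sum_any[OF two] by (rule Sum_any.expand_superset[rotated]) simp
  also have "\<dots> = 1" using k0 by (simp add: tm_e1)
  finally show ?thesis using True by simp
next
  case False
  then have "\<And>k. tm n' k (e1 n :: 'k grass) W = 0" by (auto simp: tm_e1)
  then show ?thesis using False by (simp add: vraw_Sum_any[OF two])
qed

lemma E_e1:
  assumes two: "(1::'k::field) + 1 = 0"
  shows "E T' n' (e1 n :: 'k grass) T = (if T' \<subseteq> T \<and> (\<exists>k. n = n' + 3*k \<and> T - T' = Pset n' k) then 1 else 0)"
  using E_apply[OF two e1_Lam] by (simp add: Mop_def mulm_def vraw_e1[OF two])

definition btyp :: "nat set \<Rightarrow> nat \<Rightarrow> bool" where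
  "btyp T n \<longleftrightarrow> allowed T n \<or> (T = {n - 2} \<and> 3 \<le> n)"

lemma E_e1_typ:
  assumes two: "(1::'k::field) + 1 = 0" and t': "btyp T' n'" and t: "btyp T n"
  shows "E T' n' (e1 n :: 'k grass) T = (if T' = T \<and> n' = n then 1 else 0)"
proof -
  have "(T' \<subseteq> T \<and> (\<exists>k. n = n' + 3*k \<and> T - T' = Pset n' k)) = (T' = T \<and> n' = n)"
  proof
    assume "T' \<subseteq> T \<and> (\<exists>k. n = n' + 3*k \<and> T - T' = Pset n' k)"
    then obtain k where sub: "T' \<subseteq> T" and n: "n = n' + 3*k" and P: "T - T' = Pset n' k" by blast
    show "T' = T \<and> n' = n"
    proof (cases "k = 0")
      case True then show ?thesis using sub n P by auto
    next
      case False
      then obtain k1 where k1: "k = Suc k1" by (cases k) auto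
      have x: "n - 2 \<in> Pset n' k" using n k1 by (simp add: Pset_iff)
      have y: "n - 3 \<in> Pset n' k" using n k1 by (simp add: Pset_iff)
      have xT: "n - 2 \<in> T" "n - 3 \<in> T" using x y P by auto
      have n3: "3 \<le> n" using n k1 by simp
      from t show ?thesis
      proof (unfold btyp_def, elim disjE conjE)
        assume "allowed T n" then show ?thesis using allowed_bound[OF _ xT(1)] n3 by fastforce
      next
        assume "T = {n - 2}" then show ?thesis using xT n3 by auto
      qed
    qed
  next
    assume "T' = T \<and> n' = n" then show "T' \<subseteq> T \<and> (\<exists>k. n = n' + 3*k \<and> T - T' = Pset n' k)"
      by (auto intro!: exI[of _ 0])
  qed
  then show ?thesis by (simp add: E_e1[OF two])
qed

lemma B2_typ: "x \<in> (Std \<union> SQ :: 'k::field op set) \<Longrightarrow> \<exists>T n. btyp T n \<and> x = E T n"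
  unfolding Std_def SQ_def btyp_def by blast

lemma indep_B2:
  assumes two: "(1::'k::field) + 1 = 0"
  shows "\<not> sclm.dependent (Std \<union> SQ :: 'k op set)"
proof
  assume "sclm.dependent (Std \<union> SQ :: 'k op set)"
  then obtain t u v0 where t: "finite t" "t \<subseteq> Std \<union> SQ" and s: "(\<Sum>v\<in>t. scl (u v) v) = (0 :: 'k op)"
    and v0: "v0 \<in> t" "u v0 \<noteq> 0"
    unfolding sclm.dependent_explicit by blast
  obtain T n where tn: "btyp T n" and v0E: "v0 = E T n" using B2_typ t(2) v0(1) by blast
  have val: "v (e1 n) T = (if v = v0 then 1 else 0)" if v: "v \<in> t" for v
  proof -
    obtain T' n' where tn': "btyp T' n'" and vE: "v = E T' n'" using B2_typ t(2) v by blast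
    show ?thesis
    proof (cases "v = v0")
      case True then show ?thesis using E_e1_typ[OF two tn tn] v0E by simp
    next
      case False
      then have "\<not> (T' = T \<and> n' = n)" using vE v0E by auto
      then show ?thesis using E_e1_typ[OF two tn' tn] vE False by simp
    qed
  qed
  have "0 = (\<Sum>v\<in>t. scl (u v) v) (e1 n) T" using s by simp
  also have "\<dots> = (\<Sum>v\<in>t. u v * v (e1 n) T)" by (simp add: sum_fun_app scl_def)
  also have "\<dots> = (\<Sum>v\<in>t. if v = v0 then u v else 0)" by (rule sum.cong[OF refl]) (simp add: val)
  also have "\<dots> = u v0" using t(1) v0(1) by (simp add: sum.delta)
  finally show False using v0(2) by simp
qed




lemma two_of_char:
  assumes "CHAR('k::field) = 2" shows "(1::'k) + 1 = 0"
proof -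
  have "(of_nat CHAR('k) :: 'k) = 0" by (rule of_nat_CHAR)
  then have "(of_nat 2 :: 'k) = 0" using assms by simp
  then show ?thesis by simp
qed

lemma G_eq: "{pivot 0, pivot 1, pivot 2} = {E {} 0, E {} 1, E {} (2::nat) :: 'k::field op}"
  by (simp add: pivot_eq)

lemma cand_of:
  assumes "{E {} 0, E {} 1, E {} 2} \<subseteq> L" "lie_closed L" shows "cand (L :: 'k::field op set)"
  using assms unfolding cand_def lie_closed_def by auto

lemma G_Std: "{E {} 0, E {} 1, E {} 2} \<subseteq> (Std :: 'k::field op set)"
  using E0_Std by auto

theorem corollary5p2:
  assumes "CHAR('k::field) = 2"
  shows "is_basis (std1 :: 'k op set) (lie_gen {pivot 0, pivot 1, pivot 2})
    \<and> is_basis (std1 \<union> sqpiv :: 'k op set) (slie_gen {pivot 0, pivot 1, pivot 2})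
    \<and> is_basis (std1 \<union> sqpiv :: 'k op set) (rlie_gen {pivot 0, pivot 1, pivot 2})"
proof -
  have two: "(1::'k) + 1 = 0" using two_of_char[OF assms] .
  have s1: "(std1 :: 'k op set) = Std" by (rule std1_eq[OF two])
  have s2: "(sqpiv :: 'k op set) = SQ" unfolding sqpiv_eq[OF two] SQ_def ..
  define G :: "'k op set" where "G = {E {} 0, E {} 1, E {} 2}"
  have G: "{pivot 0, pivot 1, pivot 2} = G" unfolding G_def by (rule G_eq)
  have GS: "G \<subseteq> Std" unfolding G_def by (rule G_Std)
  have GS2: "G \<subseteq> sclm.span (Std \<union> SQ)" using GS sclm.span_superset by blast
  have GS1: "G \<subseteq> sclm.span Std" using GS sclm.span_superset by blast
  have indep2: "\<not> sclm.dependent (Std \<union> SQ :: 'k op set)" by (rule indep_B2[OF two])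
  have indep1: "\<not> sclm.dependent (Std :: 'k op set)"
    using indep2 sclm.dependent_mono[of Std "Std \<union> SQ"] by blast
  have StdL: "Std \<subseteq> L" if "G \<subseteq> L" "lie_closed L" for L :: "'k op set"
  proof
    fix x :: "'k op" assume "x \<in> Std"
    then obtain T n where "allowed T n" "x = E T n" unfolding Std_def by blast
    moreover have "cand L" using cand_of that unfolding G_def by blast
    ultimately show "x \<in> L" using generation[OF two] by blast
  qed
  have subL: "sclm.subspace L" if "lie_closed L" for L :: "'k op set"
    using that unfolding lie_closed_def by simp
  have lc1: "lie_closed (sclm.span (Std :: 'k op set))"
    unfolding lie_closed_def using span_Std_brk[OF two] by auto
  have L1: "lie_gen G = sclm.span Std"
  proof
    show "lie_gen G \<subseteq> sclm.span Std" unfolding lie_gen_def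
      by (rule Inter_lower) (use GS1 lc1 in simp)
    show "sclm.span Std \<subseteq> lie_gen G" unfolding lie_gen_def
    proof (rule Inter_greatest)
      fix L :: "'k op set" assume "L \<in> {L. G \<subseteq> L \<and> lie_closed L}"
      then have h: "G \<subseteq> L" "lie_closed L" by auto
      show "sclm.span Std \<subseteq> L" by (rule sclm.span_minimal[OF StdL[OF h] subL[OF h(2)]])
    qed
  qed
  have lc2: "lie_closed (sclm.span (Std \<union> SQ :: 'k op set))"
    unfolding lie_closed_def using span_B2_brk[OF two] by auto
  have sq2: "sq A \<in> sclm.span (Std \<union> SQ)" if "A \<in> sclm.span (Std \<union> SQ :: 'k op set)" for A
    by (rule span_sq[OF two B2_linop[OF two] span_B2_brk[OF two] sq_B2[OF two] that])
  have SQL: "SQ \<subseteq> L" if "G \<subseteq> L" "lie_closed L" "\<forall>A\<in>L. odd_op A \<longrightarrow> sq A \<in> L" for L :: "'k op set"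
  proof
    fix y :: "'k op" assume "y \<in> SQ"
    then obtain m where y: "y = sq (E {} m)" using SQ_sq[OF two] by metis
    have "E {} m \<in> L" using StdL[OF that(1,2)] E0_Std by blast
    then show "y \<in> L" using that(3) odd_E0[OF two] y by blast
  qed
  have L2: "slie_gen G = sclm.span (Std \<union> SQ)"
  proof
    show "slie_gen G \<subseteq> sclm.span (Std \<union> SQ)" unfolding slie_gen_def
      by (rule Inter_lower) (use GS2 lc2 sq2 in simp)
    show "sclm.span (Std \<union> SQ) \<subseteq> slie_gen G" unfolding slie_gen_def
    proof (rule Inter_greatest)
      fix L :: "'k op set" assume "L \<in> {L. G \<subseteq> L \<and> lie_closed L \<and> (\<forall>A\<in>L. odd_op A \<longrightarrow> sq A \<in> L)}"
      then have h: "G \<subseteq> L" "lie_closed L" "\<forall>A\<in>L. odd_op A \<longrightarrow> sq A \<in> L" by auto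
      show "sclm.span (Std \<union> SQ) \<subseteq> L"
        by (rule sclm.span_minimal[OF _ subL[OF h(2)]]) (use StdL[OF h(1,2)] SQL[OF h] in blast)
    qed
  qed
  have L3: "rlie_gen G = sclm.span (Std \<union> SQ)"
  proof
    show "rlie_gen G \<subseteq> sclm.span (Std \<union> SQ)" unfolding rlie_gen_def
      by (rule Inter_lower) (use GS2 lc2 sq2 in simp)
    show "sclm.span (Std \<union> SQ) \<subseteq> rlie_gen G" unfolding rlie_gen_def
    proof (rule Inter_greatest)
      fix L :: "'k op set" assume "L \<in> {L. G \<subseteq> L \<and> lie_closed L \<and> (\<forall>A\<in>L. sq A \<in> L)}"
      then have h: "G \<subseteq> L" "lie_closed L" "\<forall>A\<in>L. sq A \<in> L" by auto
      have h3: "\<forall>A\<in>L. odd_op A \<longrightarrow> sq A \<in> L" using h(3) by blast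
      show "sclm.span (Std \<union> SQ) \<subseteq> L"
        by (rule sclm.span_minimal[OF _ subL[OF h(2)]]) (use StdL[OF h(1,2)] SQL[OF h(1,2) h3] in blast)
    qed
  qed
  show ?thesis unfolding is_basis_def G s1 s2 L1 L2 L3 using indep1 indep2 by simp
qed


end
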